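(* There exists a $77$-vertex triangulation $X$ of the cube $[0,1]^3$ satisfying: (a) each $2$-dimensional face of $[0,1]^3$ contains $16$ vertices of $X$; (b) $64$ vertices of $X$ are the points $(i/3,j/3,k/3)$, $0\le i,j,k\le 3$; (c) the remaining $13$ vertices belong to the set $\{((i+1/2)/3,(j+1/2)/3,(k+1/2)/3):0\le i,j,k\le2\}$ of $27$ points; (d) the triangulation induced on $\{1\}\times[0,1]\times[0,1]$ is the translate of the triangulation induced on $\{0\}\times[0,1]\times[0,1]$, and likewise for the other two pairs of opposite faces of the cube; (e) the diameter of each tetrahedron of $X$ is at most $\sqrt{2}/3$.
   Context: Diameters are measured in the Euclidean metric on $\mathbb{R}^3$; triangulations are by rectilinear simplices. *)

theory Defs
  imports "HOL-Analysis.Analysis"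
begin

definition pt :: "real \<Rightarrow> real \<Rightarrow> real \<Rightarrow> real^3" where
  "pt a b c = (\<chi> i. if i = 1 then a else if i = 2 then b else c)"

definition unit_cube :: "(real^3) set" where
  "unit_cube = {x. \<forall>i. 0 \<le> x $ i \<and> x $ i \<le> 1}"

definition triangulation_of :: "(real^3) set set \<Rightarrow> (real^3) set \<Rightarrow> bool" where
  "triangulation_of X P \<longleftrightarrow>
     finite X \<and>
     (\<forall>S\<in>X. card S = 4 \<and> \<not> affine_dependent S) \<and>
     (\<Union>S\<in>X. convex hull S) = P \<and>
     (\<forall>S\<in>X. \<forall>T\<in>X. (convex hull S) \<inter> (convex hull T) = convex hull (S \<inter> T))"

definition verts :: "(real^3) set set \<Rightarrow> (real^3) set" where
  "verts X = \<Union>X"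

definition cube_face :: "3 \<Rightarrow> real \<Rightarrow> (real^3) set" where
  "cube_face i c = {x \<in> unit_cube. x $ i = c}"

definition induced_tris :: "(real^3) set set \<Rightarrow> (real^3) set \<Rightarrow> (real^3) set set" where
  "induced_tris X F = {T. \<exists>S\<in>X. T \<subseteq> S \<and> card T = 3 \<and> T \<subseteq> F}"

definition grid_pts :: "(real^3) set" where
  "grid_pts = {pt (real i / 3) (real j / 3) (real k / 3) | i j k :: nat. i \<le> 3 \<and> j \<le> 3 \<and> k \<le> 3}"

definition centre_pts :: "(real^3) set" where
  "centre_pts = {pt ((real i + 1/2) / 3) ((real j + 1/2) / 3) ((real k + 1/2) / 3) | i j k :: nat.
                   i \<le> 2 \<and> j \<le> 2 \<and> k \<le> 2}"

end

theory Submission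
  imports Defs
begin


type_synonym ipt = "int \<times> int \<times> int"

lemma pt_nth [simp]: "pt a b c $ 1 = a" "pt a b c $ 2 = b" "pt a b c $ 3 = c"
  by (simp_all add: pt_def)

lemma forall_3: "(\<forall>i::3. Pr i) \<longleftrightarrow> Pr 1 \<and> Pr 2 \<and> Pr 3"
  by (metis exhaust_3)

lemma vec3_eq_iff: "(x::real^3) = y \<longleftrightarrow> x$1 = y$1 \<and> x$2 = y$2 \<and> x$3 = y$3"
  by (simp add: vec_eq_iff forall_3)

lemma inner3: "(x::real^3) \<bullet> y = x$1*y$1 + x$2*y$2 + x$3*y$3"
  by (simp add: inner_vec_def sum_3)

lemma pt_eq_iff: "pt a b c = pt a' b' c' \<longleftrightarrow> a = a' \<and> b = b' \<and> c = c'"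
  by (simp add: vec3_eq_iff)

lemma pt_add: "pt a b c + pt a' b' c' = pt (a+a') (b+b') (c+c')"
  by (simp add: vec3_eq_iff)

lemma pt_diff: "pt a b c - pt a' b' c' = pt (a-a') (b-b') (c-c')"
  by (simp add: vec3_eq_iff)

lemma pt_scale: "r *\<^sub>R pt a b c = pt (r*a) (r*b) (r*c)"
  by (simp add: vec3_eq_iff)

lemma pt_inner: "pt a b c \<bullet> pt a' b' c' = a*a' + b*b' + c*c'"
  by (simp add: inner3)

definition P :: "ipt \<Rightarrow> real^3" where
  "P v = (case v of (x,y,z) \<Rightarrow> pt (of_int x/6) (of_int y/6) (of_int z/6))"

definition Q :: "ipt \<Rightarrow> real^3" where
  "Q v = (case v of (x,y,z) \<Rightarrow> pt (of_int x/2) (of_int y/2) (of_int z/2))"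

lemma P_simp [simp]: "P (x,y,z) = pt (of_int x/6) (of_int y/6) (of_int z/6)"
  by (simp add: P_def)

lemma Q_simp [simp]: "Q (x,y,z) = pt (of_int x/2) (of_int y/2) (of_int z/2)"
  by (simp add: Q_def)

lemma inj_P: "inj P"
proof (rule injI)
  fix u v assume "P u = P v"
  then show "u = v" by (cases u; cases v) (simp add: pt_eq_iff)
qed

fun dot :: "ipt \<Rightarrow> ipt \<Rightarrow> int" where "dot (a,b,c) (x,y,z) = a*x+b*y+c*z"
fun vsub :: "ipt \<Rightarrow> ipt \<Rightarrow> ipt" where "vsub (a,b,c) (x,y,z) = (a-x,b-y,c-z)"
fun cross :: "ipt \<Rightarrow> ipt \<Rightarrow> ipt" where "cross (a,b,c) (x,y,z) = (b*z - c*y, c*x - a*z, a*y - b*x)"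

definition Nv :: "ipt \<Rightarrow> real^3" where
  "Nv n = (case n of (a,b,c) \<Rightarrow> pt (of_int a) (of_int b) (of_int c))"

lemma Nv_inner_P: "Nv n \<bullet> P v = of_int (dot n v) / 6"
  by (cases n; cases v) (simp add: Nv_def pt_inner field_simps)

lemma norm_P_diff: "norm (P a - P b) = sqrt (of_int (dot (vsub a b) (vsub a b))) / 6"
proof -
  obtain a1 a2 a3 b1 b2 b3 where ab: "a = (a1,a2,a3)" "b = (b1,b2,b3)" by (cases a; cases b) auto
  have "norm (P a - P b) = sqrt ((P a - P b) \<bullet> (P a - P b))" by (simp add: norm_eq_sqrt_inner)
  also have "(P a - P b) \<bullet> (P a - P b) = of_int (dot (vsub a b) (vsub a b)) / 36"
    by (simp add: ab pt_diff pt_inner field_simps power2_eq_square)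
  also have "sqrt (of_int (dot (vsub a b) (vsub a b)) / 36) = sqrt (of_int (dot (vsub a b) (vsub a b))) / 6"
    by (simp add: real_sqrt_divide)
  finally show ?thesis .
qed

lemma hull_face:
  fixes S :: "(real^3) set"
  assumes fin: "finite S" and le: "\<forall>v\<in>S. a \<bullet> v \<le> b"
  shows "convex hull S \<inter> {x. a \<bullet> x = b} \<subseteq> convex hull {v\<in>S. a \<bullet> v = b}"
proof
  fix x assume x: "x \<in> convex hull S \<inter> {x. a \<bullet> x = b}"
  then obtain u where u0: "\<forall>v\<in>S. 0 \<le> u v" and u1: "sum u S = 1" and ux: "(\<Sum>v\<in>S. u v *\<^sub>R v) = x"
    using convex_hull_finite[OF fin] by auto
  have ax: "a \<bullet> x = (\<Sum>v\<in>S. u v * (a \<bullet> v))"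
    unfolding ux[symmetric] by (simp add: inner_sum_right)
  have "(\<Sum>v\<in>S. u v * (b - a \<bullet> v)) = 0"
  proof -
    have "(\<Sum>v\<in>S. u v * (b - a \<bullet> v)) = (\<Sum>v\<in>S. u v * b) - (\<Sum>v\<in>S. u v * (a \<bullet> v))"
      by (simp add: right_diff_distrib sum_subtractf)
    also have "(\<Sum>v\<in>S. u v * b) = b" using u1 by (simp add: sum_distrib_right[symmetric])
    finally show ?thesis using x ax by simp
  qed
  moreover have "\<forall>v\<in>S. 0 \<le> u v * (b - a \<bullet> v)" using u0 le by auto
  ultimately have z: "\<forall>v\<in>S. u v * (b - a \<bullet> v) = 0"
    using sum_nonneg_eq_0_iff[OF fin, of "\<lambda>v. u v * (b - a \<bullet> v)"] by simp
  let ?S' = "{v\<in>S. a \<bullet> v = b}"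
  have zz: "\<forall>v\<in>S - ?S'. u v = 0" using z by auto
  have fin': "finite ?S'" using fin by auto
  have "sum u S = sum u ?S'"
    using zz fin by (intro sum.mono_neutral_right) auto
  moreover have "(\<Sum>v\<in>S. u v *\<^sub>R v) = (\<Sum>v\<in>?S'. u v *\<^sub>R v)"
    using zz fin by (intro sum.mono_neutral_right) auto
  ultimately show "x \<in> convex hull ?S'"
    using convex_hull_finite[OF fin'] u0 u1 ux by auto
qed

lemma hull_halfspace:
  fixes S :: "(real^3) set"
  assumes "\<forall>v\<in>S. a \<bullet> v \<le> b"
  shows "convex hull S \<subseteq> {x. a \<bullet> x \<le> b}"
  using assms by (intro hull_minimal) (auto simp: convex_halfspace_le)

lemma sep:
  fixes S T :: "(real^3) set"
  assumes fS: "finite S" and fT: "finite T"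
    and le: "\<forall>v\<in>S. a \<bullet> v \<le> b" and ge: "\<forall>v\<in>T. b \<le> a \<bullet> v"
    and eq: "\<forall>v\<in>S. a \<bullet> v = b \<longrightarrow> v \<in> T"
  shows "convex hull S \<inter> convex hull T = convex hull (S \<inter> T)"
proof
  show "convex hull (S \<inter> T) \<subseteq> convex hull S \<inter> convex hull T"
    by (simp add: hull_mono)
  show "convex hull S \<inter> convex hull T \<subseteq> convex hull (S \<inter> T)"
  proof
    fix x assume x: "x \<in> convex hull S \<inter> convex hull T"
    have "a \<bullet> x \<le> b" using hull_halfspace[OF le] x by auto
    moreover have "(-a) \<bullet> x \<le> -b" using hull_halfspace[of T "-a" "-b"] ge x by auto
    ultimately have "x \<in> convex hull S \<inter> {x. a \<bullet> x = b}" using x by auto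
    hence "x \<in> convex hull {v\<in>S. a \<bullet> v = b}" using hull_face[OF fS le] by auto
    moreover have "{v\<in>S. a \<bullet> v = b} \<subseteq> S \<inter> T" using eq by auto
    ultimately show "x \<in> convex hull (S \<inter> T)" using hull_mono by blast
  qed
qed

lemma reg_pair:
  fixes S T :: "(real^3) set" and F G :: "real^3 \<Rightarrow> real"
  assumes fS: "finite S" and fT: "finite T"
    and F: "\<And>x. F x = aF \<bullet> x + bF" and G: "\<And>x. G x = aG \<bullet> x + bG"
    and s1: "\<forall>v\<in>S. G v \<le> F v" and s2: "\<forall>v\<in>S. G v = F v \<longrightarrow> v \<in> T"
    and t1: "\<forall>v\<in>T. F v \<le> G v"
  shows "convex hull S \<inter> convex hull T = convex hull (S \<inter> T)"
proof (rule sep[OF fS fT, of "aG - aF" "bF - bG"])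
  show "\<forall>v\<in>S. (aG - aF) \<bullet> v \<le> bF - bG" using s1 by (auto simp: F G inner_diff_left)
  show "\<forall>v\<in>T. bF - bG \<le> (aG - aF) \<bullet> v" using t1 by (auto simp: F G inner_diff_left)
  show "\<forall>v\<in>S. (aG - aF) \<bullet> v = bF - bG \<longrightarrow> v \<in> T" using s2 by (auto simp: F G inner_diff_left)
qed

lemma in_hull4:
  fixes p q r s :: "real^3"
  assumes "0 \<le> a" "0 \<le> b" "0 \<le> c" "0 \<le> d" "a + b + c + d = 1"
    and "x = a *\<^sub>R p + b *\<^sub>R q + c *\<^sub>R r + d *\<^sub>R s"
  shows "x \<in> convex hull {p,q,r,s}"
proof -
  let ?w = "\<lambda>i::nat. if i = 0 then a else if i = 1 then b else if i = 2 then c else d"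
  let ?y = "\<lambda>i::nat. if i = 0 then p else if i = 1 then q else if i = 2 then r else s"
  have "(\<Sum>i\<in>{0,1,2,3}. ?w i *\<^sub>R ?y i) \<in> convex hull {p,q,r,s}"
    by (rule convex_sum) (use assms in \<open>auto intro: hull_inc\<close>)
  moreover have "(\<Sum>i\<in>{0::nat,1,2,3}. ?w i *\<^sub>R ?y i) = x" using assms(6) by (simp add: algebra_simps)
  ultimately show ?thesis by simp
qed

lemma unit_cube_cbox: "unit_cube = cbox 0 (1::real^3)"
  by (auto simp: unit_cube_def mem_box_cart)

lemma convex_unit_cube: "convex unit_cube"
  by (simp add: unit_cube_cbox convex_box)

lemma list_all2_ex: "list_all2 R xs ys \<Longrightarrow> x \<in> set xs \<Longrightarrow> \<exists>y. R x y"
  by (induction xs ys rule: list_all2_induct) auto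

lemma list_all2_img: "list_all2 (\<lambda>a b. f a = g b) A B \<Longrightarrow> f ` set A = g ` set B"
  by (induction A B rule: list_all2_induct) auto




definition T5e :: "ipt list list" where "T5e = [[(0,0,0),(2,2,0),(2,0,2),(0,2,2)],[(2,0,0),(0,0,0),(2,2,0),(2,0,2)],[(0,2,0),(0,0,0),(2,2,0),(0,2,2)],[(0,0,2),(0,0,0),(2,0,2),(0,2,2)],[(2,2,2),(2,2,0),(2,0,2),(0,2,2)]]"
definition T5o :: "ipt list list" where "T5o = [[(2,0,0),(0,2,0),(0,0,2),(2,2,2)],[(0,0,0),(2,0,0),(0,2,0),(0,0,2)],[(2,2,0),(2,0,0),(0,2,0),(2,2,2)],[(2,0,2),(2,0,0),(0,0,2),(2,2,2)],[(0,2,2),(0,2,0),(0,0,2),(2,2,2)]]"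
definition face0 :: "bool \<Rightarrow> ipt list list" where "face0 d = (if d then [[(1,1,1),(0,0,0),(0,2,0),(0,2,2)],[(1,1,1),(0,0,0),(0,0,2),(0,2,2)]] else [[(1,1,1),(0,2,0),(0,0,0),(0,0,2)],[(1,1,1),(0,2,0),(0,2,2),(0,0,2)]])"
definition face1 :: "bool \<Rightarrow> ipt list list" where "face1 d = (if d then [[(1,1,1),(2,0,0),(2,2,0),(2,2,2)],[(1,1,1),(2,0,0),(2,0,2),(2,2,2)]] else [[(1,1,1),(2,2,0),(2,0,0),(2,0,2)],[(1,1,1),(2,2,0),(2,2,2),(2,0,2)]])"
definition face2 :: "bool \<Rightarrow> ipt list list" where "face2 d = (if d then [[(1,1,1),(0,0,0),(2,0,0),(2,0,2)],[(1,1,1),(0,0,0),(0,0,2),(2,0,2)]] else [[(1,1,1),(2,0,0),(0,0,0),(0,0,2)],[(1,1,1),(2,0,0),(2,0,2),(0,0,2)]])"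
definition face3 :: "bool \<Rightarrow> ipt list list" where "face3 d = (if d then [[(1,1,1),(0,2,0),(2,2,0),(2,2,2)],[(1,1,1),(0,2,0),(0,2,2),(2,2,2)]] else [[(1,1,1),(2,2,0),(0,2,0),(0,2,2)],[(1,1,1),(2,2,0),(2,2,2),(0,2,2)]])"
definition face4 :: "bool \<Rightarrow> ipt list list" where "face4 d = (if d then [[(1,1,1),(0,0,0),(2,0,0),(2,2,0)],[(1,1,1),(0,0,0),(0,2,0),(2,2,0)]] else [[(1,1,1),(2,0,0),(0,0,0),(0,2,0)],[(1,1,1),(2,0,0),(2,2,0),(0,2,0)]])"
definition face5 :: "bool \<Rightarrow> ipt list list" where "face5 d = (if d then [[(1,1,1),(0,0,2),(2,0,2),(2,2,2)],[(1,1,1),(0,0,2),(0,2,2),(2,2,2)]] else [[(1,1,1),(2,0,2),(0,0,2),(0,2,2)],[(1,1,1),(2,0,2),(2,2,2),(0,2,2)]])"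

definition cone_t :: "bool \<Rightarrow> bool \<Rightarrow> bool \<Rightarrow> bool \<Rightarrow> bool \<Rightarrow> bool \<Rightarrow> ipt list list" where
  "cone_t d1 d2 d3 d4 d5 d6 = face0 d1 @ face1 d2 @ face2 d3 @ face3 d4 @ face4 d5 @ face5 d6"
definition tmpl_of :: "int list \<Rightarrow> ipt list list" where
  "tmpl_of kd = (if kd = [0] then T5e else if kd = [1] then T5o else
     cone_t (kd!1 = 1) (kd!2 = 1) (kd!3 = 1) (kd!4 = 1) (kd!5 = 1) (kd!6 = 1))"
definition kinds :: "int list list" where "kinds = [[0],[2,0,1,0,1,0,0],[1],[2,0,1,0,0,0,1],[0],[2,0,0,1,1,0,0],[1],[2,0,0,0,0,1,1],[0],[2,0,0,0,1,0,1],[0],[2,1,1,0,0,0,0],[0],[2,0,0,0,0,0,0],[1],[2,1,1,0,0,0,0],[1],[2,0,0,1,0,1,0],[1],[2,0,0,0,0,1,1],[0],[2,0,0,1,1,0,0],[1],[2,1,0,0,0,1,0],[0],[2,1,0,1,0,0,0],[1]]"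
definition shift :: "nat \<Rightarrow> nat \<Rightarrow> nat \<Rightarrow> ipt \<Rightarrow> ipt" where
  "shift i j k v = (case v of (a,b,c) \<Rightarrow> (2*int i + a, 2*int j + b, 2*int k + c))"
definition cube_tets :: "nat \<Rightarrow> nat \<Rightarrow> nat \<Rightarrow> ipt list list" where
  "cube_tets i j k = map (map (shift i j k)) (tmpl_of (kinds ! (9*i+3*j+k)))"
definition tets :: "ipt list list" where
  "tets = concat [cube_tets i j k. i \<leftarrow> [0..<3], j \<leftarrow> [0..<3], k \<leftarrow> [0..<3]]"
definition hl :: "(ipt \<times> int) list" where "hl = [((0,0,0),0),((0,0,2),13),((0,0,4),35),((0,0,6),70),((0,2,0),13),((0,2,2),15),((0,2,4),39),((0,2,6),80),((0,4,0),34),((0,4,2),39),((0,4,4),59),((0,4,6),104),((0,6,0),70),((0,6,2),80),((0,6,4),104),((0,6,6),142),((1,1,3),24),((1,3,1),24),((1,3,5),70),((1,5,3),70),((2,0,0),13),((2,0,2),15),((2,0,4),39),((2,0,6),80),((2,2,0),15),((2,2,2),28),((2,2,4),48),((2,2,6),83),((2,4,0),39),((2,4,2),48),((2,4,4),72),((2,4,6),111),((2,6,0),80),((2,6,2),83),((2,6,4),111),((2,6,6),155),((3,1,1),24),((3,1,5),70),((3,3,3),57),((3,5,1),70),((3,5,5),120),((4,0,0),35),((4,0,2),39),((4,0,4),59),((4,0,6),104),((4,2,0),39),((4,2,2),48),((4,2,4),72),((4,2,6),111),((4,4,0),59),((4,4,2),72),((4,4,4),100),((4,4,6),135),((4,6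,0),104),((4,6,2),111),((4,6,4),135),((4,6,6),181),((5,1,3),70),((5,3,1),70),((5,3,5),120),((5,5,3),120),((6,0,0),70),((6,0,2),80),((6,0,4),104),((6,0,6),142),((6,2,0),80),((6,2,2),83),((6,2,4),111),((6,2,6),155),((6,4,0),104),((6,4,2),111),((6,4,4),135),((6,4,6),181),((6,6,0),142),((6,6,2),155),((6,6,4),181),((6,6,6),216)]"
definition cl :: "(ipt \<times> int \<times> int) list" where "cl = [((15,15,15),0,4),
 ((13,2,2),0,2),
 ((2,13,2),0,2),
 ((2,2,13),0,2),
 ((13,13,13),-22,2),
 ((-1,1,11),-9,1),
 ((-1,2,12),-13,1),
 ((15,13,20),-40,2),
 ((15,9,24),-48,2),
 ((1,-1,11),-9,1),
 ((2,-1,12),-13,1),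
 ((13,15,20),-40,2),
 ((9,15,24),-48,2),
 ((1,1,9),-5,1),
 ((13,13,18),-32,2),
 ((2,2,15),-25,1),
 ((9,9,30),-60,2),
 ((13,13,75),-170,4),
 ((4,4,35),-70,2),
 ((9,9,35),-80,2),
 ((10,3,41),-106,2),
 ((3,10,41),-106,2),
 ((-1,21,2),-16,2),
 ((-1,24,5),-28,2),
 ((15,24,9),-48,2),
 ((15,20,13),-40,2),
 ((1,9,1),-5,1),
 ((13,18,13),-32,2),
 ((5,30,5),-52,2),
 ((9,30,9),-60,2),
 ((2,21,-1),-16,2),
 ((5,24,-1),-28,2),
 ((13,20,15),-40,2),
 ((9,24,15),-48,2),
 ((11,22,22),-58,2),
 ((13,20,20),-50,2),
 ((9,24,20),-58,2),
 ((9,20,24),-58,2),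
 ((13,24,24),-74,2),
 ((1,20,41),-126,2),
 ((1,24,45),-158,2),
 ((15,24,35),-122,2),
 ((15,28,39),-154,2),
 ((9,18,35),-98,2),
 ((3,18,41),-122,2),
 ((13,30,39),-158,2),
 ((7,30,45),-182,2),
 ((9,20,33),-94,2),
 ((13,24,33),-110,2),
 ((3,24,47),-170,2),
 ((7,28,47),-186,2),
 ((13,75,13),-170,4),
 ((5,36,5),-76,2),
 ((10,41,3),-106,2),
 ((9,35,9),-80,2),
 ((3,41,10),-106,2),
 ((1,41,20),-126,2),
 ((1,45,24),-158,2),
 ((15,35,24),-122,2),
 ((15,39,28),-154,2),
 ((9,33,20),-94,2),
 ((13,33,24),-110,2),
 ((3,47,24),-170,2),
 ((7,47,28),-186,2),
 ((9,35,18),-98,2),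
 ((3,41,18),-122,2),
 ((13,39,30),-158,2),
 ((7,45,30),-182,2),
 ((21,83,83),-428,4),
 ((13,39,39),-194,2),
 ((7,45,38),-214,2),
 ((7,38,45),-214,2),
 ((13,44,44),-244,2),
 ((9,1,1),-5,1),
 ((18,13,13),-32,2),
 ((15,2,2),-25,1),
 ((30,9,9),-60,2),
 ((11,-1,1),-9,1),
 ((12,-1,2),-13,1),
 ((24,15,9),-48,2),
 ((20,15,13),-40,2),
 ((11,1,-1),-9,1),
 ((12,2,-1),-13,1),
 ((24,9,15),-48,2),
 ((20,13,15),-40,2),
 ((22,11,22),-58,2),
 ((24,9,20),-58,2),
 ((20,13,20),-50,2),
 ((20,9,24),-58,2),
 ((24,13,24),-74,2),
 ((18,9,35),-98,2),
 ((18,3,41),-122,2),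
 ((30,13,39),-158,2),
 ((30,7,45),-182,2),
 ((20,1,41),-126,2),
 ((24,1,45),-158,2),
 ((24,15,35),-122,2),
 ((28,15,39),-154,2),
 ((20,9,33),-94,2),
 ((24,13,33),-110,2),
 ((24,3,47),-170,2),
 ((28,7,47),-186,2),
 ((22,22,11),-58,2),
 ((24,20,9),-58,2),
 ((20,24,9),-58,2),
 ((20,20,13),-50,2),
 ((24,24,13),-74,2),
 ((9,10,10),-30,1),
 ((9,12,12),-42,1),
 ((15,12,12),-60,1),
 ((15,14,14),-72,1),
 ((10,9,10),-30,1),
 ((12,9,12),-42,1),
 ((12,15,12),-60,1),
 ((14,15,14),-72,1),
 ((10,10,9),-30,1),
 ((12,12,9),-42,1),
 ((12,12,15),-60,1),
 ((14,14,15),-72,1),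
 ((26,26,37),-160,2),
 ((24,24,35),-140,2),
 ((28,28,35),-164,2),
 ((28,24,39),-172,2),
 ((24,28,39),-172,2),
 ((18,41,3),-122,2),
 ((18,35,9),-98,2),
 ((30,45,7),-182,2),
 ((30,39,13),-158,2),
 ((20,33,9),-94,2),
 ((24,33,13),-110,2),
 ((24,47,3),-170,2),
 ((28,47,7),-186,2),
 ((20,41,1),-126,2),
 ((24,45,1),-158,2),
 ((24,35,15),-122,2),
 ((28,39,15),-154,2),
 ((26,37,26),-160,2),
 ((24,35,24),-140,2),
 ((28,39,24),-172,2),
 ((28,35,28),-164,2),
 ((24,39,28),-172,2),
 ((18,39,39),-204,2),
 ((9,22,22),-127,1),
 ((30,35,35),-200,2),
 ((15,23,23),-155,1),
 ((28,33,35),-184,2),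
 ((24,33,39),-192,2),
 ((12,25,22),-151,1),
 ((13,25,23),-159,1),
 ((28,35,33),-184,2),
 ((24,39,33),-192,2),
 ((12,22,25),-151,1),
 ((13,23,25),-159,1),
 ((75,13,13),-170,4),
 ((35,4,4),-70,2),
 ((41,10,3),-106,2),
 ((41,3,10),-106,2),
 ((35,9,9),-80,2),
 ((33,9,20),-94,2),
 ((33,13,24),-110,2),
 ((47,3,24),-170,2),
 ((47,7,28),-186,2),
 ((41,1,20),-126,2),
 ((45,1,24),-158,2),
 ((35,15,24),-122,2),
 ((39,15,28),-154,2),
 ((41,3,18),-122,2),
 ((35,9,18),-98,2),
 ((45,7,30),-182,2),
 ((39,13,30),-158,2),
 ((83,21,83),-428,4),
 ((45,7,38),-214,2),
 ((39,13,39),-194,2),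
 ((38,7,45),-214,2),
 ((44,13,44),-244,2),
 ((33,20,9),-94,2),
 ((33,24,13),-110,2),
 ((47,24,3),-170,2),
 ((47,28,7),-186,2),
 ((41,18,3),-122,2),
 ((35,18,9),-98,2),
 ((45,30,7),-182,2),
 ((39,30,13),-158,2),
 ((41,20,1),-126,2),
 ((45,24,1),-158,2),
 ((35,24,15),-122,2),
 ((39,28,15),-154,2),
 ((37,26,26),-160,2),
 ((35,24,24),-140,2),
 ((39,28,24),-172,2),
 ((39,24,28),-172,2),
 ((35,28,28),-164,2),
 ((33,28,35),-184,2),
 ((33,24,39),-192,2),
 ((25,12,22),-151,1),
 ((25,13,23),-159,1),
 ((39,18,39),-204,2),
 ((22,9,22),-127,1),
 ((35,30,35),-200,2),
 ((23,15,23),-155,1),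
 ((39,24,33),-192,2),
 ((35,28,33),-184,2),
 ((22,12,25),-151,1),
 ((23,13,25),-159,1),
 ((83,83,21),-428,4),
 ((45,38,7),-214,2),
 ((38,45,7),-214,2),
 ((39,39,13),-194,2),
 ((44,44,13),-244,2),
 ((33,39,24),-192,2),
 ((33,35,28),-184,2),
 ((25,22,12),-151,1),
 ((25,23,13),-159,1),
 ((39,33,24),-192,2),
 ((35,33,28),-184,2),
 ((22,25,12),-151,1),
 ((23,25,13),-159,1),
 ((39,39,18),-204,2),
 ((22,22,9),-127,1),
 ((35,35,30),-200,2),
 ((23,23,15),-155,1),
 ((81,81,81),-594,4),
 ((35,35,35),-220,2),
 ((46,46,35),-330,2),
 ((46,35,46),-330,2),
 ((35,46,46),-330,2)]"
definition wl :: "nat list" where "wl = [0,3,5,17,2,0,6,21,22,23,34,40,51,55,57,68,5,22,39,56,1,0,8,20,0,4,7,17,24,24,38,42,53,51,59,72,73,90,107,124,141,75,75,85,93,75,76,89,92,102,106,110,119,126,126,136,144,158,175,192,209,153,156,160,170,155,153,161,174,177,178,187,195,204,208,212,221]"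




definition indep_ok :: "ipt list \<Rightarrow> bool" where
  "indep_ok l = list_all (\<lambda>v. case filter (\<lambda>w. w \<noteq> v) l of [p,q,r] \<Rightarrow>
       (let n = cross (vsub q p) (vsub r p) in dot n q = dot n p \<and> dot n r = dot n p \<and> dot n v \<noteq> dot n p) | _ \<Rightarrow> False) l"
fun inbox :: "ipt \<Rightarrow> bool" where "inbox (x,y,z) = (0 \<le> x \<and> x \<le> 6 \<and> 0 \<le> y \<and> y \<le> 6 \<and> 0 \<le> z \<and> z \<le> 6)"
definition diam_ok :: "ipt list \<Rightarrow> bool" where
  "diam_ok l = list_all (\<lambda>v. list_all (\<lambda>w. dot (vsub v w) (vsub v w) \<le> 8) l) l"
fun rc :: "ipt list \<Rightarrow> ipt \<Rightarrow> int \<Rightarrow> int \<Rightarrow> (ipt \<times> int) list \<Rightarrow> nat \<Rightarrow> bool" where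
  "rc l a b D [] c = (c = length l)"
| "rc l a b D ((v,h)#r) c = (if v \<in> set l then dot a v + b = D*h \<and> rc l a b D r (Suc c)
                              else dot a v + b < D*h \<and> rc l a b D r c)"
fun regchk :: "ipt list \<Rightarrow> ipt \<times> int \<times> int \<Rightarrow> bool" where
  "regchk l (a,b,D) = (0 < D \<and> rc l a b D hl 0)"
fun crdn :: "nat \<Rightarrow> ipt \<Rightarrow> int" where
  "crdn k (x,y,z) = (if k = 0 then x else if k = 1 then y else z)"
fun trk :: "nat \<Rightarrow> ipt \<Rightarrow> ipt" where
  "trk k (x,y,z) = (if k = 0 then (x+6,y,z) else if k = 1 then (x,y+6,z) else (x,y,z+6))"
definition ff :: "nat \<Rightarrow> int \<Rightarrow> ipt list \<Rightarrow> ipt list" where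
  "ff k e l = filter (\<lambda>v. crdn k v = e) l"
definition tris_on :: "nat \<Rightarrow> int \<Rightarrow> ipt list list" where
  "tris_on k e = concat (map (\<lambda>l. if length (ff k e l) = 3 then [ff k e l] else []) tets)"
fun allev :: "ipt \<Rightarrow> bool" where
  "allev (x,y,z) = (x mod 2 = 0 \<and> y mod 2 = 0 \<and> z mod 2 = 0 \<and> inbox (x,y,z))"
fun allodd :: "ipt \<Rightarrow> bool" where
  "allodd (x,y,z) = (x mod 2 = 1 \<and> y mod 2 = 1 \<and> z mod 2 = 1 \<and> inbox (x,y,z))"

lemma K1: "list_all (\<lambda>l. length l = 4 \<and> distinct l \<and> indep_ok l \<and> list_all inbox l \<and> diam_ok l) tets"
  by code_simp
lemma K2: "list_all2 regchk tets cl"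
  by code_simp
lemma K3: "distinct (map fst hl) \<and> length hl = 77"
  by code_simp
lemma K4: "list_all2 (\<lambda>p k. k < length tets \<and> fst p \<in> set (tets ! k)) hl wl"
  by code_simp
lemma K6: "list_all (\<lambda>k. list_all (\<lambda>e. length (filter (\<lambda>v. crdn k v = e) (map fst hl)) = 16) [0,6]) [0,1,2]"
  by code_simp
lemma K7: "list_all (\<lambda>k. list_all (\<lambda>e. list_all (\<lambda>l. length (ff k e l) \<le> 3) tets) [0,6]) [0,1,2]"
  by code_simp
lemma K8: "list_all (\<lambda>k. list_all2 (\<lambda>t t'. set (map (trk k) t) = set t') (tris_on k 0) (tris_on k 6)) [0,1,2]"
  by code_simp
lemma K9: "list_all (\<lambda>i. list_all (\<lambda>j. list_all (\<lambda>k. (2*int i, 2*int j, 2*int k) \<in> set (map fst hl)) [0..<4]) [0..<4]) [0..<4]"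
  by code_simp
lemma K10: "list_all (\<lambda>v. allev v \<or> allodd v) (map fst hl)"
  by code_simp



lemma tet_1:
  assumes "0 \<le> ((-1/2)*u1 + (-1/2)*u2 + (-1/2)*u3 + 1)" "0 \<le> ((1/2)*u1 + (1/2)*u2 + (-1/2)*u3)" "0 \<le> ((1/2)*u1 + (-1/2)*u2 + (1/2)*u3)" "0 \<le> ((-1/2)*u1 + (1/2)*u2 + (1/2)*u3)"
  shows "pt u1 u2 u3 \<in> convex hull (Q ` set [(0,0,0),(2,2,0),(2,0,2),(0,2,2)])"
proof -
  have "pt u1 u2 u3 \<in> convex hull {Q (0,0,0), Q (2,2,0), Q (2,0,2), Q (0,2,2)}"
    by (rule in_hull4[of "((-1/2)*u1 + (-1/2)*u2 + (-1/2)*u3 + 1)" "((1/2)*u1 + (1/2)*u2 + (-1/2)*u3)" "((1/2)*u1 + (-1/2)*u2 + (1/2)*u3)" "((-1/2)*u1 + (1/2)*u2 + (1/2)*u3)"]) (use assms in \<open>simp_all add: pt_scale pt_add pt_eq_iff field_simps\<close>)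
  thus ?thesis by simp
qed

lemma tet_2:
  assumes "0 \<le> (u1 - u2 - u3)" "0 \<le> (-u1 + 1)" "0 \<le> (u2)" "0 \<le> (u3)"
  shows "pt u1 u2 u3 \<in> convex hull (Q ` set [(2,0,0),(0,0,0),(2,2,0),(2,0,2)])"
proof -
  have "pt u1 u2 u3 \<in> convex hull {Q (2,0,0), Q (0,0,0), Q (2,2,0), Q (2,0,2)}"
    by (rule in_hull4[of "(u1 - u2 - u3)" "(-u1 + 1)" "(u2)" "(u3)"]) (use assms in \<open>simp_all add: pt_scale pt_add pt_eq_iff field_simps\<close>)
  thus ?thesis by simp
qed

lemma tet_3:
  assumes "0 \<le> (-u1 + u2 - u3)" "0 \<le> (-u2 + 1)" "0 \<le> (u1)" "0 \<le> (u3)"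
  shows "pt u1 u2 u3 \<in> convex hull (Q ` set [(0,2,0),(0,0,0),(2,2,0),(0,2,2)])"
proof -
  have "pt u1 u2 u3 \<in> convex hull {Q (0,2,0), Q (0,0,0), Q (2,2,0), Q (0,2,2)}"
    by (rule in_hull4[of "(-u1 + u2 - u3)" "(-u2 + 1)" "(u1)" "(u3)"]) (use assms in \<open>simp_all add: pt_scale pt_add pt_eq_iff field_simps\<close>)
  thus ?thesis by simp
qed

lemma tet_4:
  assumes "0 \<le> (-u1 - u2 + u3)" "0 \<le> (-u3 + 1)" "0 \<le> (u1)" "0 \<le> (u2)"
  shows "pt u1 u2 u3 \<in> convex hull (Q ` set [(0,0,2),(0,0,0),(2,0,2),(0,2,2)])"
proof -
  have "pt u1 u2 u3 \<in> convex hull {Q (0,0,2), Q (0,0,0), Q (2,0,2), Q (0,2,2)}"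
    by (rule in_hull4[of "(-u1 - u2 + u3)" "(-u3 + 1)" "(u1)" "(u2)"]) (use assms in \<open>simp_all add: pt_scale pt_add pt_eq_iff field_simps\<close>)
  thus ?thesis by simp
qed

lemma tet_5:
  assumes "0 \<le> (u1 + u2 + u3 - 2)" "0 \<le> (-u3 + 1)" "0 \<le> (-u2 + 1)" "0 \<le> (-u1 + 1)"
  shows "pt u1 u2 u3 \<in> convex hull (Q ` set [(2,2,2),(2,2,0),(2,0,2),(0,2,2)])"
proof -
  have "pt u1 u2 u3 \<in> convex hull {Q (2,2,2), Q (2,2,0), Q (2,0,2), Q (0,2,2)}"
    by (rule in_hull4[of "(u1 + u2 + u3 - 2)" "(-u3 + 1)" "(-u2 + 1)" "(-u1 + 1)"]) (use assms in \<open>simp_all add: pt_scale pt_add pt_eq_iff field_simps\<close>)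
  thus ?thesis by simp
qed

lemma tet_6:
  assumes "0 \<le> ((1/2)*u1 + (-1/2)*u2 + (-1/2)*u3 + (1/2))" "0 \<le> ((-1/2)*u1 + (1/2)*u2 + (-1/2)*u3 + (1/2))" "0 \<le> ((-1/2)*u1 + (-1/2)*u2 + (1/2)*u3 + (1/2))" "0 \<le> ((1/2)*u1 + (1/2)*u2 + (1/2)*u3 + (-1/2))"
  shows "pt u1 u2 u3 \<in> convex hull (Q ` set [(2,0,0),(0,2,0),(0,0,2),(2,2,2)])"
proof -
  have "pt u1 u2 u3 \<in> convex hull {Q (2,0,0), Q (0,2,0), Q (0,0,2), Q (2,2,2)}"
    by (rule in_hull4[of "((1/2)*u1 + (-1/2)*u2 + (-1/2)*u3 + (1/2))" "((-1/2)*u1 + (1/2)*u2 + (-1/2)*u3 + (1/2))" "((-1/2)*u1 + (-1/2)*u2 + (1/2)*u3 + (1/2))" "((1/2)*u1 + (1/2)*u2 + (1/2)*u3 + (-1/2))"]) (use assms in \<open>simp_all add: pt_scale pt_add pt_eq_iff field_simps\<close>)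
  thus ?thesis by simp
qed

lemma tet_7:
  assumes "0 \<le> (-u1 - u2 - u3 + 1)" "0 \<le> (u1)" "0 \<le> (u2)" "0 \<le> (u3)"
  shows "pt u1 u2 u3 \<in> convex hull (Q ` set [(0,0,0),(2,0,0),(0,2,0),(0,0,2)])"
proof -
  have "pt u1 u2 u3 \<in> convex hull {Q (0,0,0), Q (2,0,0), Q (0,2,0), Q (0,0,2)}"
    by (rule in_hull4[of "(-u1 - u2 - u3 + 1)" "(u1)" "(u2)" "(u3)"]) (use assms in \<open>simp_all add: pt_scale pt_add pt_eq_iff field_simps\<close>)
  thus ?thesis by simp
qed

lemma tet_8:
  assumes "0 \<le> (u1 + u2 - u3 - 1)" "0 \<le> (-u2 + 1)" "0 \<le> (-u1 + 1)" "0 \<le> (u3)"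
  shows "pt u1 u2 u3 \<in> convex hull (Q ` set [(2,2,0),(2,0,0),(0,2,0),(2,2,2)])"
proof -
  have "pt u1 u2 u3 \<in> convex hull {Q (2,2,0), Q (2,0,0), Q (0,2,0), Q (2,2,2)}"
    by (rule in_hull4[of "(u1 + u2 - u3 - 1)" "(-u2 + 1)" "(-u1 + 1)" "(u3)"]) (use assms in \<open>simp_all add: pt_scale pt_add pt_eq_iff field_simps\<close>)
  thus ?thesis by simp
qed

lemma tet_9:
  assumes "0 \<le> (u1 - u2 + u3 - 1)" "0 \<le> (-u3 + 1)" "0 \<le> (-u1 + 1)" "0 \<le> (u2)"
  shows "pt u1 u2 u3 \<in> convex hull (Q ` set [(2,0,2),(2,0,0),(0,0,2),(2,2,2)])"
proof -
  have "pt u1 u2 u3 \<in> convex hull {Q (2,0,2), Q (2,0,0), Q (0,0,2), Q (2,2,2)}"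
    by (rule in_hull4[of "(u1 - u2 + u3 - 1)" "(-u3 + 1)" "(-u1 + 1)" "(u2)"]) (use assms in \<open>simp_all add: pt_scale pt_add pt_eq_iff field_simps\<close>)
  thus ?thesis by simp
qed

lemma tet_10:
  assumes "0 \<le> (-u1 + u2 + u3 - 1)" "0 \<le> (-u3 + 1)" "0 \<le> (-u2 + 1)" "0 \<le> (u1)"
  shows "pt u1 u2 u3 \<in> convex hull (Q ` set [(0,2,2),(0,2,0),(0,0,2),(2,2,2)])"
proof -
  have "pt u1 u2 u3 \<in> convex hull {Q (0,2,2), Q (0,2,0), Q (0,0,2), Q (2,2,2)}"
    by (rule in_hull4[of "(-u1 + u2 + u3 - 1)" "(-u3 + 1)" "(-u2 + 1)" "(u1)"]) (use assms in \<open>simp_all add: pt_scale pt_add pt_eq_iff field_simps\<close>)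
  thus ?thesis by simp
qed

lemma tet_11:
  assumes "0 \<le> (2*u1)" "0 \<le> (-u1 - u2 + 1)" "0 \<le> (u2 - u3)" "0 \<le> (-u1 + u3)"
  shows "pt u1 u2 u3 \<in> convex hull (Q ` set [(1,1,1),(0,0,0),(0,2,0),(0,2,2)])"
proof -
  have "pt u1 u2 u3 \<in> convex hull {Q (1,1,1), Q (0,0,0), Q (0,2,0), Q (0,2,2)}"
    by (rule in_hull4[of "(2*u1)" "(-u1 - u2 + 1)" "(u2 - u3)" "(-u1 + u3)"]) (use assms in \<open>simp_all add: pt_scale pt_add pt_eq_iff field_simps\<close>)
  thus ?thesis by simp
qed

lemma tet_12:
  assumes "0 \<le> (2*u1)" "0 \<le> (-u1 - u3 + 1)" "0 \<le> (-u2 + u3)" "0 \<le> (-u1 + u2)"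
  shows "pt u1 u2 u3 \<in> convex hull (Q ` set [(1,1,1),(0,0,0),(0,0,2),(0,2,2)])"
proof -
  have "pt u1 u2 u3 \<in> convex hull {Q (1,1,1), Q (0,0,0), Q (0,0,2), Q (0,2,2)}"
    by (rule in_hull4[of "(2*u1)" "(-u1 - u3 + 1)" "(-u2 + u3)" "(-u1 + u2)"]) (use assms in \<open>simp_all add: pt_scale pt_add pt_eq_iff field_simps\<close>)
  thus ?thesis by simp
qed

lemma tet_13:
  assumes "0 \<le> (2*u1)" "0 \<le> (-u1 + u2)" "0 \<le> (-u2 - u3 + 1)" "0 \<le> (-u1 + u3)"
  shows "pt u1 u2 u3 \<in> convex hull (Q ` set [(1,1,1),(0,2,0),(0,0,0),(0,0,2)])"
proof -
  have "pt u1 u2 u3 \<in> convex hull {Q (1,1,1), Q (0,2,0), Q (0,0,0), Q (0,0,2)}"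
    by (rule in_hull4[of "(2*u1)" "(-u1 + u2)" "(-u2 - u3 + 1)" "(-u1 + u3)"]) (use assms in \<open>simp_all add: pt_scale pt_add pt_eq_iff field_simps\<close>)
  thus ?thesis by simp
qed

lemma tet_14:
  assumes "0 \<le> (2*u1)" "0 \<le> (-u1 - u3 + 1)" "0 \<le> (u2 + u3 - 1)" "0 \<le> (-u1 - u2 + 1)"
  shows "pt u1 u2 u3 \<in> convex hull (Q ` set [(1,1,1),(0,2,0),(0,2,2),(0,0,2)])"
proof -
  have "pt u1 u2 u3 \<in> convex hull {Q (1,1,1), Q (0,2,0), Q (0,2,2), Q (0,0,2)}"
    by (rule in_hull4[of "(2*u1)" "(-u1 - u3 + 1)" "(u2 + u3 - 1)" "(-u1 - u2 + 1)"]) (use assms in \<open>simp_all add: pt_scale pt_add pt_eq_iff field_simps\<close>)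
  thus ?thesis by simp
qed

lemma tet_15:
  assumes "0 \<le> (-2*u1 + 2)" "0 \<le> (u1 - u2)" "0 \<le> (u2 - u3)" "0 \<le> (u1 + u3 - 1)"
  shows "pt u1 u2 u3 \<in> convex hull (Q ` set [(1,1,1),(2,0,0),(2,2,0),(2,2,2)])"
proof -
  have "pt u1 u2 u3 \<in> convex hull {Q (1,1,1), Q (2,0,0), Q (2,2,0), Q (2,2,2)}"
    by (rule in_hull4[of "(-2*u1 + 2)" "(u1 - u2)" "(u2 - u3)" "(u1 + u3 - 1)"]) (use assms in \<open>simp_all add: pt_scale pt_add pt_eq_iff field_simps\<close>)
  thus ?thesis by simp
qed

lemma tet_16:
  assumes "0 \<le> (-2*u1 + 2)" "0 \<le> (u1 - u3)" "0 \<le> (-u2 + u3)" "0 \<le> (u1 + u2 - 1)"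
  shows "pt u1 u2 u3 \<in> convex hull (Q ` set [(1,1,1),(2,0,0),(2,0,2),(2,2,2)])"
proof -
  have "pt u1 u2 u3 \<in> convex hull {Q (1,1,1), Q (2,0,0), Q (2,0,2), Q (2,2,2)}"
    by (rule in_hull4[of "(-2*u1 + 2)" "(u1 - u3)" "(-u2 + u3)" "(u1 + u2 - 1)"]) (use assms in \<open>simp_all add: pt_scale pt_add pt_eq_iff field_simps\<close>)
  thus ?thesis by simp
qed

lemma tet_17:
  assumes "0 \<le> (-2*u1 + 2)" "0 \<le> (u1 + u2 - 1)" "0 \<le> (-u2 - u3 + 1)" "0 \<le> (u1 + u3 - 1)"
  shows "pt u1 u2 u3 \<in> convex hull (Q ` set [(1,1,1),(2,2,0),(2,0,0),(2,0,2)])"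
proof -
  have "pt u1 u2 u3 \<in> convex hull {Q (1,1,1), Q (2,2,0), Q (2,0,0), Q (2,0,2)}"
    by (rule in_hull4[of "(-2*u1 + 2)" "(u1 + u2 - 1)" "(-u2 - u3 + 1)" "(u1 + u3 - 1)"]) (use assms in \<open>simp_all add: pt_scale pt_add pt_eq_iff field_simps\<close>)
  thus ?thesis by simp
qed

lemma tet_18:
  assumes "0 \<le> (-2*u1 + 2)" "0 \<le> (u1 - u3)" "0 \<le> (u2 + u3 - 1)" "0 \<le> (u1 - u2)"
  shows "pt u1 u2 u3 \<in> convex hull (Q ` set [(1,1,1),(2,2,0),(2,2,2),(2,0,2)])"
proof -
  have "pt u1 u2 u3 \<in> convex hull {Q (1,1,1), Q (2,2,0), Q (2,2,2), Q (2,0,2)}"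
    by (rule in_hull4[of "(-2*u1 + 2)" "(u1 - u3)" "(u2 + u3 - 1)" "(u1 - u2)"]) (use assms in \<open>simp_all add: pt_scale pt_add pt_eq_iff field_simps\<close>)
  thus ?thesis by simp
qed

lemma tet_19:
  assumes "0 \<le> (2*u2)" "0 \<le> (-u1 - u2 + 1)" "0 \<le> (u1 - u3)" "0 \<le> (-u2 + u3)"
  shows "pt u1 u2 u3 \<in> convex hull (Q ` set [(1,1,1),(0,0,0),(2,0,0),(2,0,2)])"
proof -
  have "pt u1 u2 u3 \<in> convex hull {Q (1,1,1), Q (0,0,0), Q (2,0,0), Q (2,0,2)}"
    by (rule in_hull4[of "(2*u2)" "(-u1 - u2 + 1)" "(u1 - u3)" "(-u2 + u3)"]) (use assms in \<open>simp_all add: pt_scale pt_add pt_eq_iff field_simps\<close>)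
  thus ?thesis by simp
qed

lemma tet_20:
  assumes "0 \<le> (2*u2)" "0 \<le> (-u2 - u3 + 1)" "0 \<le> (-u1 + u3)" "0 \<le> (u1 - u2)"
  shows "pt u1 u2 u3 \<in> convex hull (Q ` set [(1,1,1),(0,0,0),(0,0,2),(2,0,2)])"
proof -
  have "pt u1 u2 u3 \<in> convex hull {Q (1,1,1), Q (0,0,0), Q (0,0,2), Q (2,0,2)}"
    by (rule in_hull4[of "(2*u2)" "(-u2 - u3 + 1)" "(-u1 + u3)" "(u1 - u2)"]) (use assms in \<open>simp_all add: pt_scale pt_add pt_eq_iff field_simps\<close>)
  thus ?thesis by simp
qed

lemma tet_21:
  assumes "0 \<le> (2*u2)" "0 \<le> (u1 - u2)" "0 \<le> (-u1 - u3 + 1)" "0 \<le> (-u2 + u3)"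
  shows "pt u1 u2 u3 \<in> convex hull (Q ` set [(1,1,1),(2,0,0),(0,0,0),(0,0,2)])"
proof -
  have "pt u1 u2 u3 \<in> convex hull {Q (1,1,1), Q (2,0,0), Q (0,0,0), Q (0,0,2)}"
    by (rule in_hull4[of "(2*u2)" "(u1 - u2)" "(-u1 - u3 + 1)" "(-u2 + u3)"]) (use assms in \<open>simp_all add: pt_scale pt_add pt_eq_iff field_simps\<close>)
  thus ?thesis by simp
qed

lemma tet_22:
  assumes "0 \<le> (2*u2)" "0 \<le> (-u2 - u3 + 1)" "0 \<le> (u1 + u3 - 1)" "0 \<le> (-u1 - u2 + 1)"
  shows "pt u1 u2 u3 \<in> convex hull (Q ` set [(1,1,1),(2,0,0),(2,0,2),(0,0,2)])"
proof -
  have "pt u1 u2 u3 \<in> convex hull {Q (1,1,1), Q (2,0,0), Q (2,0,2), Q (0,0,2)}"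
    by (rule in_hull4[of "(2*u2)" "(-u2 - u3 + 1)" "(u1 + u3 - 1)" "(-u1 - u2 + 1)"]) (use assms in \<open>simp_all add: pt_scale pt_add pt_eq_iff field_simps\<close>)
  thus ?thesis by simp
qed

lemma tet_23:
  assumes "0 \<le> (-2*u2 + 2)" "0 \<le> (-u1 + u2)" "0 \<le> (u1 - u3)" "0 \<le> (u2 + u3 - 1)"
  shows "pt u1 u2 u3 \<in> convex hull (Q ` set [(1,1,1),(0,2,0),(2,2,0),(2,2,2)])"
proof -
  have "pt u1 u2 u3 \<in> convex hull {Q (1,1,1), Q (0,2,0), Q (2,2,0), Q (2,2,2)}"
    by (rule in_hull4[of "(-2*u2 + 2)" "(-u1 + u2)" "(u1 - u3)" "(u2 + u3 - 1)"]) (use assms in \<open>simp_all add: pt_scale pt_add pt_eq_iff field_simps\<close>)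
  thus ?thesis by simp
qed

lemma tet_24:
  assumes "0 \<le> (-2*u2 + 2)" "0 \<le> (u2 - u3)" "0 \<le> (-u1 + u3)" "0 \<le> (u1 + u2 - 1)"
  shows "pt u1 u2 u3 \<in> convex hull (Q ` set [(1,1,1),(0,2,0),(0,2,2),(2,2,2)])"
proof -
  have "pt u1 u2 u3 \<in> convex hull {Q (1,1,1), Q (0,2,0), Q (0,2,2), Q (2,2,2)}"
    by (rule in_hull4[of "(-2*u2 + 2)" "(u2 - u3)" "(-u1 + u3)" "(u1 + u2 - 1)"]) (use assms in \<open>simp_all add: pt_scale pt_add pt_eq_iff field_simps\<close>)
  thus ?thesis by simp
qed

lemma tet_25:
  assumes "0 \<le> (-2*u2 + 2)" "0 \<le> (u1 + u2 - 1)" "0 \<le> (-u1 - u3 + 1)" "0 \<le> (u2 + u3 - 1)"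
  shows "pt u1 u2 u3 \<in> convex hull (Q ` set [(1,1,1),(2,2,0),(0,2,0),(0,2,2)])"
proof -
  have "pt u1 u2 u3 \<in> convex hull {Q (1,1,1), Q (2,2,0), Q (0,2,0), Q (0,2,2)}"
    by (rule in_hull4[of "(-2*u2 + 2)" "(u1 + u2 - 1)" "(-u1 - u3 + 1)" "(u2 + u3 - 1)"]) (use assms in \<open>simp_all add: pt_scale pt_add pt_eq_iff field_simps\<close>)
  thus ?thesis by simp
qed

lemma tet_26:
  assumes "0 \<le> (-2*u2 + 2)" "0 \<le> (u2 - u3)" "0 \<le> (u1 + u3 - 1)" "0 \<le> (-u1 + u2)"
  shows "pt u1 u2 u3 \<in> convex hull (Q ` set [(1,1,1),(2,2,0),(2,2,2),(0,2,2)])"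
proof -
  have "pt u1 u2 u3 \<in> convex hull {Q (1,1,1), Q (2,2,0), Q (2,2,2), Q (0,2,2)}"
    by (rule in_hull4[of "(-2*u2 + 2)" "(u2 - u3)" "(u1 + u3 - 1)" "(-u1 + u2)"]) (use assms in \<open>simp_all add: pt_scale pt_add pt_eq_iff field_simps\<close>)
  thus ?thesis by simp
qed

lemma tet_27:
  assumes "0 \<le> (2*u3)" "0 \<le> (-u1 - u3 + 1)" "0 \<le> (u1 - u2)" "0 \<le> (u2 - u3)"
  shows "pt u1 u2 u3 \<in> convex hull (Q ` set [(1,1,1),(0,0,0),(2,0,0),(2,2,0)])"
proof -
  have "pt u1 u2 u3 \<in> convex hull {Q (1,1,1), Q (0,0,0), Q (2,0,0), Q (2,2,0)}"
    by (rule in_hull4[of "(2*u3)" "(-u1 - u3 + 1)" "(u1 - u2)" "(u2 - u3)"]) (use assms in \<open>simp_all add: pt_scale pt_add pt_eq_iff field_simps\<close>)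
  thus ?thesis by simp
qed

lemma tet_28:
  assumes "0 \<le> (2*u3)" "0 \<le> (-u2 - u3 + 1)" "0 \<le> (-u1 + u2)" "0 \<le> (u1 - u3)"
  shows "pt u1 u2 u3 \<in> convex hull (Q ` set [(1,1,1),(0,0,0),(0,2,0),(2,2,0)])"
proof -
  have "pt u1 u2 u3 \<in> convex hull {Q (1,1,1), Q (0,0,0), Q (0,2,0), Q (2,2,0)}"
    by (rule in_hull4[of "(2*u3)" "(-u2 - u3 + 1)" "(-u1 + u2)" "(u1 - u3)"]) (use assms in \<open>simp_all add: pt_scale pt_add pt_eq_iff field_simps\<close>)
  thus ?thesis by simp
qed

lemma tet_29:
  assumes "0 \<le> (2*u3)" "0 \<le> (u1 - u3)" "0 \<le> (-u1 - u2 + 1)" "0 \<le> (u2 - u3)"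
  shows "pt u1 u2 u3 \<in> convex hull (Q ` set [(1,1,1),(2,0,0),(0,0,0),(0,2,0)])"
proof -
  have "pt u1 u2 u3 \<in> convex hull {Q (1,1,1), Q (2,0,0), Q (0,0,0), Q (0,2,0)}"
    by (rule in_hull4[of "(2*u3)" "(u1 - u3)" "(-u1 - u2 + 1)" "(u2 - u3)"]) (use assms in \<open>simp_all add: pt_scale pt_add pt_eq_iff field_simps\<close>)
  thus ?thesis by simp
qed

lemma tet_30:
  assumes "0 \<le> (2*u3)" "0 \<le> (-u2 - u3 + 1)" "0 \<le> (u1 + u2 - 1)" "0 \<le> (-u1 - u3 + 1)"
  shows "pt u1 u2 u3 \<in> convex hull (Q ` set [(1,1,1),(2,0,0),(2,2,0),(0,2,0)])"
proof -
  have "pt u1 u2 u3 \<in> convex hull {Q (1,1,1), Q (2,0,0), Q (2,2,0), Q (0,2,0)}"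
    by (rule in_hull4[of "(2*u3)" "(-u2 - u3 + 1)" "(u1 + u2 - 1)" "(-u1 - u3 + 1)"]) (use assms in \<open>simp_all add: pt_scale pt_add pt_eq_iff field_simps\<close>)
  thus ?thesis by simp
qed

lemma tet_31:
  assumes "0 \<le> (-2*u3 + 2)" "0 \<le> (-u1 + u3)" "0 \<le> (u1 - u2)" "0 \<le> (u2 + u3 - 1)"
  shows "pt u1 u2 u3 \<in> convex hull (Q ` set [(1,1,1),(0,0,2),(2,0,2),(2,2,2)])"
proof -
  have "pt u1 u2 u3 \<in> convex hull {Q (1,1,1), Q (0,0,2), Q (2,0,2), Q (2,2,2)}"
    by (rule in_hull4[of "(-2*u3 + 2)" "(-u1 + u3)" "(u1 - u2)" "(u2 + u3 - 1)"]) (use assms in \<open>simp_all add: pt_scale pt_add pt_eq_iff field_simps\<close>)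
  thus ?thesis by simp
qed

lemma tet_32:
  assumes "0 \<le> (-2*u3 + 2)" "0 \<le> (-u2 + u3)" "0 \<le> (-u1 + u2)" "0 \<le> (u1 + u3 - 1)"
  shows "pt u1 u2 u3 \<in> convex hull (Q ` set [(1,1,1),(0,0,2),(0,2,2),(2,2,2)])"
proof -
  have "pt u1 u2 u3 \<in> convex hull {Q (1,1,1), Q (0,0,2), Q (0,2,2), Q (2,2,2)}"
    by (rule in_hull4[of "(-2*u3 + 2)" "(-u2 + u3)" "(-u1 + u2)" "(u1 + u3 - 1)"]) (use assms in \<open>simp_all add: pt_scale pt_add pt_eq_iff field_simps\<close>)
  thus ?thesis by simp
qed

lemma tet_33:
  assumes "0 \<le> (-2*u3 + 2)" "0 \<le> (u1 + u3 - 1)" "0 \<le> (-u1 - u2 + 1)" "0 \<le> (u2 + u3 - 1)"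
  shows "pt u1 u2 u3 \<in> convex hull (Q ` set [(1,1,1),(2,0,2),(0,0,2),(0,2,2)])"
proof -
  have "pt u1 u2 u3 \<in> convex hull {Q (1,1,1), Q (2,0,2), Q (0,0,2), Q (0,2,2)}"
    by (rule in_hull4[of "(-2*u3 + 2)" "(u1 + u3 - 1)" "(-u1 - u2 + 1)" "(u2 + u3 - 1)"]) (use assms in \<open>simp_all add: pt_scale pt_add pt_eq_iff field_simps\<close>)
  thus ?thesis by simp
qed

lemma tet_34:
  assumes "0 \<le> (-2*u3 + 2)" "0 \<le> (-u2 + u3)" "0 \<le> (u1 + u2 - 1)" "0 \<le> (-u1 + u3)"
  shows "pt u1 u2 u3 \<in> convex hull (Q ` set [(1,1,1),(2,0,2),(2,2,2),(0,2,2)])"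
proof -
  have "pt u1 u2 u3 \<in> convex hull {Q (1,1,1), Q (2,0,2), Q (2,2,2), Q (0,2,2)}"
    by (rule in_hull4[of "(-2*u3 + 2)" "(-u2 + u3)" "(u1 + u2 - 1)" "(-u1 + u3)"]) (use assms in \<open>simp_all add: pt_scale pt_add pt_eq_iff field_simps\<close>)
  thus ?thesis by simp
qed

definition covers :: "ipt list list \<Rightarrow> bool" where
  "covers ts \<longleftrightarrow> (\<forall>u1 u2 u3. 0 \<le> u1 \<and> u1 \<le> 1 \<and> 0 \<le> u2 \<and> u2 \<le> 1 \<and> 0 \<le> u3 \<and> u3 \<le> 1 \<longrightarrow>
      (\<exists>t\<in>set ts. pt u1 u2 u3 \<in> convex hull (Q ` set t)))"

lemma cov_T5e: "covers T5e"
  unfolding covers_def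
proof (intro allI impI)
  fix u1 u2 u3 :: real
  assume b: "0 \<le> u1 \<and> u1 \<le> 1 \<and> 0 \<le> u2 \<and> u2 \<le> 1 \<and> 0 \<le> u3 \<and> u3 \<le> 1"
  show "\<exists>t\<in>set T5e. pt u1 u2 u3 \<in> convex hull (Q ` set t)"
  proof -
    show ?thesis
    proof (cases "u1 - u2 - u3 \<ge> 0")
      case C0: True
      have H: "pt u1 u2 u3 \<in> convex hull (Q ` set [(2,0,0),(0,0,0),(2,2,0),(2,0,2)])" by (rule tet_2) (use b C0 in linarith)+
      thus ?thesis using H unfolding T5e_def by (intro bexI[where x="[(2,0,0),(0,0,0),(2,2,0),(2,0,2)]"]) simp_all
    next
      case N0: False
      show ?thesis
      proof (cases "u2 - u1 - u3 \<ge> 0")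
        case C1: True
        have H: "pt u1 u2 u3 \<in> convex hull (Q ` set [(0,2,0),(0,0,0),(2,2,0),(0,2,2)])" by (rule tet_3) (use b N0 C1 in linarith)+
        thus ?thesis using H unfolding T5e_def by (intro bexI[where x="[(0,2,0),(0,0,0),(2,2,0),(0,2,2)]"]) simp_all
      next
        case N1: False
        show ?thesis
        proof (cases "u3 - u1 - u2 \<ge> 0")
          case C2: True
          have H: "pt u1 u2 u3 \<in> convex hull (Q ` set [(0,0,2),(0,0,0),(2,0,2),(0,2,2)])" by (rule tet_4) (use b N0 N1 C2 in linarith)+
          thus ?thesis using H unfolding T5e_def by (intro bexI[where x="[(0,0,2),(0,0,0),(2,0,2),(0,2,2)]"]) simp_all
        next
          case N2: False
          show ?thesis
          proof (cases "u1 + u2 + u3 \<ge> 2")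
            case C3: True
            have H: "pt u1 u2 u3 \<in> convex hull (Q ` set [(2,2,2),(2,2,0),(2,0,2),(0,2,2)])" by (rule tet_5) (use b N0 N1 N2 C3 in linarith)+
            thus ?thesis using H unfolding T5e_def by (intro bexI[where x="[(2,2,2),(2,2,0),(2,0,2),(0,2,2)]"]) simp_all
          next
            case N3: False
            have H: "pt u1 u2 u3 \<in> convex hull (Q ` set [(0,0,0),(2,2,0),(2,0,2),(0,2,2)])" by (rule tet_1) (use b N0 N1 N2 N3 in linarith)+
            thus ?thesis using H unfolding T5e_def by (intro bexI[where x="[(0,0,0),(2,2,0),(2,0,2),(0,2,2)]"]) simp_all
          qed
        qed
      qed
    qed
  qed
qed

lemma cov_T5o: "covers T5o"
  unfolding covers_def
proof (intro allI impI)
  fix u1 u2 u3 :: real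
  assume b: "0 \<le> u1 \<and> u1 \<le> 1 \<and> 0 \<le> u2 \<and> u2 \<le> 1 \<and> 0 \<le> u3 \<and> u3 \<le> 1"
  show "\<exists>t\<in>set T5o. pt u1 u2 u3 \<in> convex hull (Q ` set t)"
  proof -
    show ?thesis
    proof (cases "(1 - u1) - u2 - u3 \<ge> 0")
      case C0: True
      have H: "pt u1 u2 u3 \<in> convex hull (Q ` set [(0,0,0),(2,0,0),(0,2,0),(0,0,2)])" by (rule tet_7) (use b C0 in linarith)+
      thus ?thesis using H unfolding T5o_def by (intro bexI[where x="[(0,0,0),(2,0,0),(0,2,0),(0,0,2)]"]) simp_all
    next
      case N0: False
      show ?thesis
      proof (cases "u2 - (1 - u1) - u3 \<ge> 0")
        case C1: True
        have H: "pt u1 u2 u3 \<in> convex hull (Q ` set [(2,2,0),(2,0,0),(0,2,0),(2,2,2)])" by (rule tet_8) (use b N0 C1 in linarith)+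
        thus ?thesis using H unfolding T5o_def by (intro bexI[where x="[(2,2,0),(2,0,0),(0,2,0),(2,2,2)]"]) simp_all
      next
        case N1: False
        show ?thesis
        proof (cases "u3 - (1 - u1) - u2 \<ge> 0")
          case C2: True
          have H: "pt u1 u2 u3 \<in> convex hull (Q ` set [(2,0,2),(2,0,0),(0,0,2),(2,2,2)])" by (rule tet_9) (use b N0 N1 C2 in linarith)+
          thus ?thesis using H unfolding T5o_def by (intro bexI[where x="[(2,0,2),(2,0,0),(0,0,2),(2,2,2)]"]) simp_all
        next
          case N2: False
          show ?thesis
          proof (cases "(1 - u1) + u2 + u3 \<ge> 2")
            case C3: True
            have H: "pt u1 u2 u3 \<in> convex hull (Q ` set [(0,2,2),(0,2,0),(0,0,2),(2,2,2)])" by (rule tet_10) (use b N0 N1 N2 C3 in linarith)+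
            thus ?thesis using H unfolding T5o_def by (intro bexI[where x="[(0,2,2),(0,2,0),(0,0,2),(2,2,2)]"]) simp_all
          next
            case N3: False
            have H: "pt u1 u2 u3 \<in> convex hull (Q ` set [(2,0,0),(0,2,0),(0,0,2),(2,2,2)])" by (rule tet_6) (use b N0 N1 N2 N3 in linarith)+
            thus ?thesis using H unfolding T5o_def by (intro bexI[where x="[(2,0,0),(0,2,0),(0,0,2),(2,2,2)]"]) simp_all
          qed
        qed
      qed
    qed
  qed
qed

lemma cov_face0:
  assumes b: "0 \<le> u1 \<and> u1 \<le> 1 \<and> 0 \<le> u2 \<and> u2 \<le> 1 \<and> 0 \<le> u3 \<and> u3 \<le> 1"
    and r: "u1 \<le> u2 \<and> u1 \<le> 1 - u2 \<and> u1 \<le> u3 \<and> u1 \<le> 1 - u3"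
  shows "\<exists>t\<in>set (face0 d). pt u1 u2 u3 \<in> convex hull (Q ` set t)"
proof (cases d)
  case D: True
  show ?thesis
  proof -
    show ?thesis
    proof (cases "u2 \<ge> u3")
      case C0: True
      have H: "pt u1 u2 u3 \<in> convex hull (Q ` set [(1,1,1),(0,0,0),(0,2,0),(0,2,2)])" by (rule tet_11) (use b r C0 in linarith)+
      thus ?thesis using H D unfolding face0_def by (intro bexI[where x="[(1,1,1),(0,0,0),(0,2,0),(0,2,2)]"]) simp_all
    next
      case N0: False
      have H: "pt u1 u2 u3 \<in> convex hull (Q ` set [(1,1,1),(0,0,0),(0,0,2),(0,2,2)])" by (rule tet_12) (use b r N0 in linarith)+
      thus ?thesis using H D unfolding face0_def by (intro bexI[where x="[(1,1,1),(0,0,0),(0,0,2),(0,2,2)]"]) simp_all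
    qed
  qed
next
  case D: False
  show ?thesis
  proof -
    show ?thesis
    proof (cases "u2 + u3 \<le> 1")
      case C0: True
      have H: "pt u1 u2 u3 \<in> convex hull (Q ` set [(1,1,1),(0,2,0),(0,0,0),(0,0,2)])" by (rule tet_13) (use b r C0 in linarith)+
      thus ?thesis using H D unfolding face0_def by (intro bexI[where x="[(1,1,1),(0,2,0),(0,0,0),(0,0,2)]"]) simp_all
    next
      case N0: False
      have H: "pt u1 u2 u3 \<in> convex hull (Q ` set [(1,1,1),(0,2,0),(0,2,2),(0,0,2)])" by (rule tet_14) (use b r N0 in linarith)+
      thus ?thesis using H D unfolding face0_def by (intro bexI[where x="[(1,1,1),(0,2,0),(0,2,2),(0,0,2)]"]) simp_all
    qed
  qed
qed

lemma cov_face1: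
  assumes b: "0 \<le> u1 \<and> u1 \<le> 1 \<and> 0 \<le> u2 \<and> u2 \<le> 1 \<and> 0 \<le> u3 \<and> u3 \<le> 1"
    and r: "(1 - u1) \<le> u2 \<and> (1 - u1) \<le> 1 - u2 \<and> (1 - u1) \<le> u3 \<and> (1 - u1) \<le> 1 - u3"
  shows "\<exists>t\<in>set (face1 d). pt u1 u2 u3 \<in> convex hull (Q ` set t)"
proof (cases d)
  case D: True
  show ?thesis
  proof -
    show ?thesis
    proof (cases "u2 \<ge> u3")
      case C0: True
      have H: "pt u1 u2 u3 \<in> convex hull (Q ` set [(1,1,1),(2,0,0),(2,2,0),(2,2,2)])" by (rule tet_15) (use b r C0 in linarith)+
      thus ?thesis using H D unfolding face1_def by (intro bexI[where x="[(1,1,1),(2,0,0),(2,2,0),(2,2,2)]"]) simp_all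
    next
      case N0: False
      have H: "pt u1 u2 u3 \<in> convex hull (Q ` set [(1,1,1),(2,0,0),(2,0,2),(2,2,2)])" by (rule tet_16) (use b r N0 in linarith)+
      thus ?thesis using H D unfolding face1_def by (intro bexI[where x="[(1,1,1),(2,0,0),(2,0,2),(2,2,2)]"]) simp_all
    qed
  qed
next
  case D: False
  show ?thesis
  proof -
    show ?thesis
    proof (cases "u2 + u3 \<le> 1")
      case C0: True
      have H: "pt u1 u2 u3 \<in> convex hull (Q ` set [(1,1,1),(2,2,0),(2,0,0),(2,0,2)])" by (rule tet_17) (use b r C0 in linarith)+
      thus ?thesis using H D unfolding face1_def by (intro bexI[where x="[(1,1,1),(2,2,0),(2,0,0),(2,0,2)]"]) simp_all
    next
      case N0: False
      have H: "pt u1 u2 u3 \<in> convex hull (Q ` set [(1,1,1),(2,2,0),(2,2,2),(2,0,2)])" by (rule tet_18) (use b r N0 in linarith)+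
      thus ?thesis using H D unfolding face1_def by (intro bexI[where x="[(1,1,1),(2,2,0),(2,2,2),(2,0,2)]"]) simp_all
    qed
  qed
qed

lemma cov_face2:
  assumes b: "0 \<le> u1 \<and> u1 \<le> 1 \<and> 0 \<le> u2 \<and> u2 \<le> 1 \<and> 0 \<le> u3 \<and> u3 \<le> 1"
    and r: "u2 \<le> u1 \<and> u2 \<le> 1 - u1 \<and> u2 \<le> u3 \<and> u2 \<le> 1 - u3"
  shows "\<exists>t\<in>set (face2 d). pt u1 u2 u3 \<in> convex hull (Q ` set t)"
proof (cases d)
  case D: True
  show ?thesis
  proof -
    show ?thesis
    proof (cases "u1 \<ge> u3")
      case C0: True
      have H: "pt u1 u2 u3 \<in> convex hull (Q ` set [(1,1,1),(0,0,0),(2,0,0),(2,0,2)])" by (rule tet_19) (use b r C0 in linarith)+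
      thus ?thesis using H D unfolding face2_def by (intro bexI[where x="[(1,1,1),(0,0,0),(2,0,0),(2,0,2)]"]) simp_all
    next
      case N0: False
      have H: "pt u1 u2 u3 \<in> convex hull (Q ` set [(1,1,1),(0,0,0),(0,0,2),(2,0,2)])" by (rule tet_20) (use b r N0 in linarith)+
      thus ?thesis using H D unfolding face2_def by (intro bexI[where x="[(1,1,1),(0,0,0),(0,0,2),(2,0,2)]"]) simp_all
    qed
  qed
next
  case D: False
  show ?thesis
  proof -
    show ?thesis
    proof (cases "u1 + u3 \<le> 1")
      case C0: True
      have H: "pt u1 u2 u3 \<in> convex hull (Q ` set [(1,1,1),(2,0,0),(0,0,0),(0,0,2)])" by (rule tet_21) (use b r C0 in linarith)+
      thus ?thesis using H D unfolding face2_def by (intro bexI[where x="[(1,1,1),(2,0,0),(0,0,0),(0,0,2)]"]) simp_all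
    next
      case N0: False
      have H: "pt u1 u2 u3 \<in> convex hull (Q ` set [(1,1,1),(2,0,0),(2,0,2),(0,0,2)])" by (rule tet_22) (use b r N0 in linarith)+
      thus ?thesis using H D unfolding face2_def by (intro bexI[where x="[(1,1,1),(2,0,0),(2,0,2),(0,0,2)]"]) simp_all
    qed
  qed
qed

lemma cov_face3:
  assumes b: "0 \<le> u1 \<and> u1 \<le> 1 \<and> 0 \<le> u2 \<and> u2 \<le> 1 \<and> 0 \<le> u3 \<and> u3 \<le> 1"
    and r: "(1 - u2) \<le> u1 \<and> (1 - u2) \<le> 1 - u1 \<and> (1 - u2) \<le> u3 \<and> (1 - u2) \<le> 1 - u3"
  shows "\<exists>t\<in>set (face3 d). pt u1 u2 u3 \<in> convex hull (Q ` set t)"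
proof (cases d)
  case D: True
  show ?thesis
  proof -
    show ?thesis
    proof (cases "u1 \<ge> u3")
      case C0: True
      have H: "pt u1 u2 u3 \<in> convex hull (Q ` set [(1,1,1),(0,2,0),(2,2,0),(2,2,2)])" by (rule tet_23) (use b r C0 in linarith)+
      thus ?thesis using H D unfolding face3_def by (intro bexI[where x="[(1,1,1),(0,2,0),(2,2,0),(2,2,2)]"]) simp_all
    next
      case N0: False
      have H: "pt u1 u2 u3 \<in> convex hull (Q ` set [(1,1,1),(0,2,0),(0,2,2),(2,2,2)])" by (rule tet_24) (use b r N0 in linarith)+
      thus ?thesis using H D unfolding face3_def by (intro bexI[where x="[(1,1,1),(0,2,0),(0,2,2),(2,2,2)]"]) simp_all
    qed
  qed
next
  case D: False
  show ?thesis
  proof -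
    show ?thesis
    proof (cases "u1 + u3 \<le> 1")
      case C0: True
      have H: "pt u1 u2 u3 \<in> convex hull (Q ` set [(1,1,1),(2,2,0),(0,2,0),(0,2,2)])" by (rule tet_25) (use b r C0 in linarith)+
      thus ?thesis using H D unfolding face3_def by (intro bexI[where x="[(1,1,1),(2,2,0),(0,2,0),(0,2,2)]"]) simp_all
    next
      case N0: False
      have H: "pt u1 u2 u3 \<in> convex hull (Q ` set [(1,1,1),(2,2,0),(2,2,2),(0,2,2)])" by (rule tet_26) (use b r N0 in linarith)+
      thus ?thesis using H D unfolding face3_def by (intro bexI[where x="[(1,1,1),(2,2,0),(2,2,2),(0,2,2)]"]) simp_all
    qed
  qed
qed

lemma cov_face4:
  assumes b: "0 \<le> u1 \<and> u1 \<le> 1 \<and> 0 \<le> u2 \<and> u2 \<le> 1 \<and> 0 \<le> u3 \<and> u3 \<le> 1"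
    and r: "u3 \<le> u1 \<and> u3 \<le> 1 - u1 \<and> u3 \<le> u2 \<and> u3 \<le> 1 - u2"
  shows "\<exists>t\<in>set (face4 d). pt u1 u2 u3 \<in> convex hull (Q ` set t)"
proof (cases d)
  case D: True
  show ?thesis
  proof -
    show ?thesis
    proof (cases "u1 \<ge> u2")
      case C0: True
      have H: "pt u1 u2 u3 \<in> convex hull (Q ` set [(1,1,1),(0,0,0),(2,0,0),(2,2,0)])" by (rule tet_27) (use b r C0 in linarith)+
      thus ?thesis using H D unfolding face4_def by (intro bexI[where x="[(1,1,1),(0,0,0),(2,0,0),(2,2,0)]"]) simp_all
    next
      case N0: False
      have H: "pt u1 u2 u3 \<in> convex hull (Q ` set [(1,1,1),(0,0,0),(0,2,0),(2,2,0)])" by (rule tet_28) (use b r N0 in linarith)+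
      thus ?thesis using H D unfolding face4_def by (intro bexI[where x="[(1,1,1),(0,0,0),(0,2,0),(2,2,0)]"]) simp_all
    qed
  qed
next
  case D: False
  show ?thesis
  proof -
    show ?thesis
    proof (cases "u1 + u2 \<le> 1")
      case C0: True
      have H: "pt u1 u2 u3 \<in> convex hull (Q ` set [(1,1,1),(2,0,0),(0,0,0),(0,2,0)])" by (rule tet_29) (use b r C0 in linarith)+
      thus ?thesis using H D unfolding face4_def by (intro bexI[where x="[(1,1,1),(2,0,0),(0,0,0),(0,2,0)]"]) simp_all
    next
      case N0: False
      have H: "pt u1 u2 u3 \<in> convex hull (Q ` set [(1,1,1),(2,0,0),(2,2,0),(0,2,0)])" by (rule tet_30) (use b r N0 in linarith)+
      thus ?thesis using H D unfolding face4_def by (intro bexI[where x="[(1,1,1),(2,0,0),(2,2,0),(0,2,0)]"]) simp_all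
    qed
  qed
qed

lemma cov_face5:
  assumes b: "0 \<le> u1 \<and> u1 \<le> 1 \<and> 0 \<le> u2 \<and> u2 \<le> 1 \<and> 0 \<le> u3 \<and> u3 \<le> 1"
    and r: "(1 - u3) \<le> u1 \<and> (1 - u3) \<le> 1 - u1 \<and> (1 - u3) \<le> u2 \<and> (1 - u3) \<le> 1 - u2"
  shows "\<exists>t\<in>set (face5 d). pt u1 u2 u3 \<in> convex hull (Q ` set t)"
proof (cases d)
  case D: True
  show ?thesis
  proof -
    show ?thesis
    proof (cases "u1 \<ge> u2")
      case C0: True
      have H: "pt u1 u2 u3 \<in> convex hull (Q ` set [(1,1,1),(0,0,2),(2,0,2),(2,2,2)])" by (rule tet_31) (use b r C0 in linarith)+
      thus ?thesis using H D unfolding face5_def by (intro bexI[where x="[(1,1,1),(0,0,2),(2,0,2),(2,2,2)]"]) simp_all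
    next
      case N0: False
      have H: "pt u1 u2 u3 \<in> convex hull (Q ` set [(1,1,1),(0,0,2),(0,2,2),(2,2,2)])" by (rule tet_32) (use b r N0 in linarith)+
      thus ?thesis using H D unfolding face5_def by (intro bexI[where x="[(1,1,1),(0,0,2),(0,2,2),(2,2,2)]"]) simp_all
    qed
  qed
next
  case D: False
  show ?thesis
  proof -
    show ?thesis
    proof (cases "u1 + u2 \<le> 1")
      case C0: True
      have H: "pt u1 u2 u3 \<in> convex hull (Q ` set [(1,1,1),(2,0,2),(0,0,2),(0,2,2)])" by (rule tet_33) (use b r C0 in linarith)+
      thus ?thesis using H D unfolding face5_def by (intro bexI[where x="[(1,1,1),(2,0,2),(0,0,2),(0,2,2)]"]) simp_all
    next
      case N0: False
      have H: "pt u1 u2 u3 \<in> convex hull (Q ` set [(1,1,1),(2,0,2),(2,2,2),(0,2,2)])" by (rule tet_34) (use b r N0 in linarith)+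
      thus ?thesis using H D unfolding face5_def by (intro bexI[where x="[(1,1,1),(2,0,2),(2,2,2),(0,2,2)]"]) simp_all
    qed
  qed
qed

lemma cov_cone: "covers (cone_t d1 d2 d3 d4 d5 d6)"
  unfolding covers_def
proof (intro allI impI)
  fix u1 u2 u3 :: real
  assume b: "0 \<le> u1 \<and> u1 \<le> 1 \<and> 0 \<le> u2 \<and> u2 \<le> 1 \<and> 0 \<le> u3 \<and> u3 \<le> 1"
  define m where "m = min (min (min u1 (1 - u1)) (min u2 (1 - u2))) (min u3 (1 - u3))"
  have mle: "m \<le> u1" "m \<le> 1 - u1" "m \<le> u2" "m \<le> 1 - u2" "m \<le> u3" "m \<le> 1 - u3"
    unfolding m_def by linarith+
  have "m = u1 \<or> m = 1 - u1 \<or> m = u2 \<or> m = 1 - u2 \<or> m = u3 \<or> m = 1 - u3"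
    unfolding m_def by linarith
  then show "\<exists>t\<in>set (cone_t d1 d2 d3 d4 d5 d6). pt u1 u2 u3 \<in> convex hull (Q ` set t)"
  proof (elim disjE)
    assume "m = u1"
    hence "u1 \<le> u2 \<and> u1 \<le> 1 - u2 \<and> u1 \<le> u3 \<and> u1 \<le> 1 - u3" using mle by linarith
    from cov_face0[OF b this] obtain t where "t \<in> set (face0 d1)" "pt u1 u2 u3 \<in> convex hull (Q ` set t)" by blast
    thus ?thesis unfolding cone_t_def by auto
  next
    assume "m = 1 - u1"
    hence "(1 - u1) \<le> u2 \<and> (1 - u1) \<le> 1 - u2 \<and> (1 - u1) \<le> u3 \<and> (1 - u1) \<le> 1 - u3" using mle by linarith
    from cov_face1[OF b this] obtain t where "t \<in> set (face1 d2)" "pt u1 u2 u3 \<in> convex hull (Q ` set t)" by blast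
    thus ?thesis unfolding cone_t_def by auto
  next
    assume "m = u2"
    hence "u2 \<le> u1 \<and> u2 \<le> 1 - u1 \<and> u2 \<le> u3 \<and> u2 \<le> 1 - u3" using mle by linarith
    from cov_face2[OF b this] obtain t where "t \<in> set (face2 d3)" "pt u1 u2 u3 \<in> convex hull (Q ` set t)" by blast
    thus ?thesis unfolding cone_t_def by auto
  next
    assume "m = 1 - u2"
    hence "(1 - u2) \<le> u1 \<and> (1 - u2) \<le> 1 - u1 \<and> (1 - u2) \<le> u3 \<and> (1 - u2) \<le> 1 - u3" using mle by linarith
    from cov_face3[OF b this] obtain t where "t \<in> set (face3 d4)" "pt u1 u2 u3 \<in> convex hull (Q ` set t)" by blast
    thus ?thesis unfolding cone_t_def by auto
  next
    assume "m = u3"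
    hence "u3 \<le> u1 \<and> u3 \<le> 1 - u1 \<and> u3 \<le> u2 \<and> u3 \<le> 1 - u2" using mle by linarith
    from cov_face4[OF b this] obtain t where "t \<in> set (face4 d5)" "pt u1 u2 u3 \<in> convex hull (Q ` set t)" by blast
    thus ?thesis unfolding cone_t_def by auto
  next
    assume "m = 1 - u3"
    hence "(1 - u3) \<le> u1 \<and> (1 - u3) \<le> 1 - u1 \<and> (1 - u3) \<le> u2 \<and> (1 - u3) \<le> 1 - u2" using mle by linarith
    from cov_face5[OF b this] obtain t where "t \<in> set (face5 d6)" "pt u1 u2 u3 \<in> convex hull (Q ` set t)" by blast
    thus ?thesis unfolding cone_t_def by auto
  qed
qed

lemma cov_tmpl: "covers (tmpl_of kd)"
  unfolding tmpl_of_def using cov_T5e cov_T5o cov_cone by simp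



lemma tl_props: "l \<in> set tets \<Longrightarrow> length l = 4 \<and> distinct l \<and> indep_ok l \<and> list_all inbox l \<and> diam_ok l"
  using K1 by (simp add: list_all_iff)

definition XX :: "(real^3) set set" where "XX = (\<lambda>l. P ` set l) ` set tets"

lemma P_in_cube: "inbox v \<Longrightarrow> P v \<in> unit_cube"
  by (cases v) (simp add: unit_cube_def forall_3)

lemma tl_in_cube: "l \<in> set tets \<Longrightarrow> v \<in> set l \<Longrightarrow> P v \<in> unit_cube"
proof -
  assume "l \<in> set tets" "v \<in> set l"
  hence "inbox v" using tl_props[of l] by (auto simp: list_all_iff)
  thus ?thesis by (rule P_in_cube)
qed

lemma hull_sub: "l \<in> set tets \<Longrightarrow> convex hull (P ` set l) \<subseteq> unit_cube"
  by (rule hull_minimal) (auto simp: convex_unit_cube intro: tl_in_cube simp del: P_simp)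

lemma cube_tets_sub: assumes "i < 3" "j < 3" "k < 3" shows "set (cube_tets i j k) \<subseteq> set tets"
proof
  fix x assume x: "x \<in> set (cube_tets i j k)"
  have "i \<in> {0..<3}" "j \<in> {0..<3}" "k \<in> {0..<3}" using assms by auto
  have "set tets = (\<Union>i\<in>{0..<3}. \<Union>j\<in>{0..<3}. \<Union>k\<in>{0..<3}. set (cube_tets i j k))"
    unfolding tets_def by (simp add: set_concat)
  thus "x \<in> set tets" using x \<open>i \<in> {0..<3}\<close> \<open>j \<in> {0..<3}\<close> \<open>k \<in> {0..<3}\<close> by blast
qed

lemma P_shift: "P (shift i j k e) = P (2*int i, 2*int j, 2*int k) + (1/3) *\<^sub>R Q e"
  by (cases e) (simp add: shift_def pt_scale pt_add pt_eq_iff field_simps)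

definition idx :: "real \<Rightarrow> nat" where
  "idx r = (if 3*r < 1 then 0 else if 3*r < 2 then 1 else 2)"

lemma idx_props: "0 \<le> r \<Longrightarrow> r \<le> 1 \<Longrightarrow> idx r < 3 \<and> 0 \<le> 3*r - real (idx r) \<and> 3*r - real (idx r) \<le> 1"
  by (auto simp: idx_def)

lemma cover: "unit_cube \<subseteq> (\<Union>S\<in>XX. convex hull S)"
proof
  fix x assume x: "x \<in> unit_cube"
  hence b: "0 \<le> x$1" "x$1 \<le> 1" "0 \<le> x$2" "x$2 \<le> 1" "0 \<le> x$3" "x$3 \<le> 1"
    by (auto simp: unit_cube_def)
  define i where "i = idx (x$1)"
  define j where "j = idx (x$2)"
  define k where "k = idx (x$3)"
  define u1 where "u1 = 3 * x$1 - real i"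
  define u2 where "u2 = 3 * x$2 - real j"
  define u3 where "u3 = 3 * x$3 - real k"
  have ijk: "i < 3" "j < 3" "k < 3" and ub: "0 \<le> u1 \<and> u1 \<le> 1 \<and> 0 \<le> u2 \<and> u2 \<le> 1 \<and> 0 \<le> u3 \<and> u3 \<le> 1"
    using idx_props[of "x$1"] idx_props[of "x$2"] idx_props[of "x$3"] b
    by (auto simp: i_def j_def k_def u1_def u2_def u3_def)
  from cov_tmpl[of "kinds ! (9*i+3*j+k)"] ub obtain t where
    t: "t \<in> set (tmpl_of (kinds ! (9*i+3*j+k)))" and th: "pt u1 u2 u3 \<in> convex hull (Q ` set t)"
    unfolding covers_def by blast
  define l where "l = map (shift i j k) t"
  have l: "l \<in> set tets" using t cube_tets_sub[OF ijk] by (auto simp: l_def cube_tets_def)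
  define f where "f = (\<lambda>y. P (2*int i, 2*int j, 2*int k) + (1/3) *\<^sub>R y)"
  have "P ` set l = f ` (Q ` set t)"
    by (simp add: l_def f_def image_image P_shift)
  hence "convex hull (P ` set l) = f ` (convex hull (Q ` set t))"
    by (simp add: f_def convex_hull_affinity)
  moreover have "x = f (pt u1 u2 u3)"
    by (simp add: f_def u1_def u2_def u3_def pt_scale pt_add vec3_eq_iff field_simps)
  ultimately have "x \<in> convex hull (P ` set l)" using th by auto
  thus "x \<in> (\<Union>S\<in>XX. convex hull S)" using l by (auto simp: XX_def)
qed

lemma cover_eq: "(\<Union>S\<in>XX. convex hull S) = unit_cube"
  using cover hull_sub by (auto simp: XX_def)

definition hgt :: "ipt \<Rightarrow> real" where "hgt v = of_int (the (map_of hl v))"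

lemma rc_sound:
  "rc l a b D xs c \<Longrightarrow> (\<forall>p\<in>set xs. if fst p \<in> set l then dot a (fst p) + b = D * snd p else dot a (fst p) + b < D * snd p)
     \<and> c + length (filter (\<lambda>p. fst p \<in> set l) xs) = length l"
  by (induction l a b D xs c rule: rc.induct) (auto split: if_splits)

lemma hl_dist: "distinct (map fst hl)" using K3 by simp

lemma hgt_eq: "(v,h) \<in> set hl \<Longrightarrow> hgt v = of_int h"
  using map_of_is_SomeI[OF hl_dist] by (simp add: hgt_def)

lemma cert_of: "l \<in> set tets \<Longrightarrow> \<exists>a b D. 0 < D \<and> rc l a b D hl 0"
proof -
  assume "l \<in> set tets"
  from list_all2_ex[OF K2 this] obtain c where r: "regchk l c" by blast
  obtain a b D where c: "c = (a,b,D)" by (cases c)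
  from r c have "0 < D \<and> rc l a b D hl 0" by simp
  thus ?thesis by blast
qed

lemma verts_in_hl: assumes l: "l \<in> set tets" shows "set l \<subseteq> set (map fst hl)"
proof -
  obtain a b D where "rc l a b D hl 0" using cert_of[OF l] by blast
  from rc_sound[OF this] have len: "length (filter (\<lambda>p. fst p \<in> set l) hl) = length l" by simp
  let ?fl = "map fst (filter (\<lambda>p. fst p \<in> set l) hl)"
  have d: "distinct ?fl" using hl_dist by (simp add: distinct_map_filter)
  have sub: "set ?fl \<subseteq> set l" by auto
  have "card (set ?fl) = length ?fl" by (rule distinct_card[OF d])
  also have "\<dots> = length l" using len by simp
  also have "\<dots> = card (set l)" using tl_props[OF l] by (simp add: distinct_card)
  finally have "card (set ?fl) = card (set l)" .
  hence "set ?fl = set l" using sub by (simp add: card_subset_eq)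
  thus ?thesis by auto
qed

lemma tet_func:
  assumes l: "l \<in> set tets"
  shows "\<exists>F aF bF. (\<forall>x. F x = aF \<bullet> x + bF) \<and>
     (\<forall>v\<in>set (map fst hl). F (P v) \<le> hgt v \<and> (F (P v) = hgt v \<longleftrightarrow> v \<in> set l))"
proof -
  obtain a b D where D: "0 < D" and r: "rc l a b D hl 0" using cert_of[OF l] by blast
  define F where "F = (\<lambda>x. ((6 / of_int D) *\<^sub>R Nv a) \<bullet> x + of_int b / of_int D)"
  have FP: "F (P v) = (of_int (dot a v) + of_int b) / of_int D" for v
    using D by (simp add: F_def Nv_inner_P field_simps)
  have "\<forall>v\<in>set (map fst hl). F (P v) \<le> hgt v \<and> (F (P v) = hgt v \<longleftrightarrow> v \<in> set l)"
  proof
    fix v assume "v \<in> set (map fst hl)"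
    then obtain h where vh: "(v,h) \<in> set hl" by auto
    have hv: "hgt v = of_int h" using hgt_eq[OF vh] .
    have c: "if v \<in> set l then dot a v + b = D * h else dot a v + b < D * h"
      using rc_sound[OF r] vh by fastforce
    have Dr: "(0::real) < of_int D" using D by simp
    show "F (P v) \<le> hgt v \<and> (F (P v) = hgt v \<longleftrightarrow> v \<in> set l)"
    proof (cases "v \<in> set l")
      case True
      hence "of_int (dot a v) + of_int b = (of_int D * of_int h :: real)" using c
        by (metis of_int_add of_int_mult)
      thus ?thesis using True Dr by (simp add: FP hv field_simps)
    next
      case False
      hence "of_int (dot a v) + of_int b < (of_int D * of_int h :: real)" using c
        by (metis of_int_add of_int_mult of_int_less_iff)
      hence "F (P v) < hgt v" using Dr by (simp add: FP hv field_simps)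
      thus ?thesis using False by simp
    qed
  qed
  moreover have "\<forall>x. F x = ((6 / of_int D) *\<^sub>R Nv a) \<bullet> x + of_int b / of_int D" by (simp add: F_def)
  ultimately show ?thesis by blast
qed

lemma pair_ok:
  assumes l: "l \<in> set tets" and l': "l' \<in> set tets"
  shows "convex hull (P ` set l) \<inter> convex hull (P ` set l') = convex hull (P ` set l \<inter> P ` set l')"
proof -
  obtain F aF bF where F: "\<forall>x. F x = aF \<bullet> x + bF"
    and Fh: "\<forall>v\<in>set (map fst hl). F (P v) \<le> hgt v \<and> (F (P v) = hgt v \<longleftrightarrow> v \<in> set l)"
    using tet_func[OF l] by blast
  obtain G aG bG where G: "\<forall>x. G x = aG \<bullet> x + bG"
    and Gh: "\<forall>v\<in>set (map fst hl). G (P v) \<le> hgt v \<and> (G (P v) = hgt v \<longleftrightarrow> v \<in> set l')"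
    using tet_func[OF l'] by blast
  have s: "set l \<subseteq> set (map fst hl)" "set l' \<subseteq> set (map fst hl)"
    using verts_in_hl[OF l] verts_in_hl[OF l'] .
  show ?thesis
  proof (rule reg_pair[where F=F and G=G])
    show "\<And>x. F x = aF \<bullet> x + bF" using F by blast
    show "\<And>x. G x = aG \<bullet> x + bG" using G by blast
    show "\<forall>v\<in>P ` set l. G v \<le> F v"
    proof
      fix x assume "x \<in> P ` set l"
      then obtain v where v: "v \<in> set l" "x = P v" by auto
      hence vv: "v \<in> set (map fst hl)" using s by blast
      have "F (P v) = hgt v" using bspec[OF Fh vv] v by blast
      moreover have "G (P v) \<le> hgt v" using bspec[OF Gh vv] by blast
      ultimately show "G x \<le> F x" using v by simp
    qed
    show "\<forall>v\<in>P ` set l. G v = F v \<longrightarrow> v \<in> P ` set l'"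
    proof (intro ballI impI)
      fix x assume "x \<in> P ` set l" "G x = F x"
      then obtain v where v: "v \<in> set l" "x = P v" "G (P v) = F (P v)" by auto
      hence vv: "v \<in> set (map fst hl)" using s by blast
      have "F (P v) = hgt v" using bspec[OF Fh vv] v by blast
      hence "G (P v) = hgt v" using v by simp
      hence "v \<in> set l'" using bspec[OF Gh vv] by blast
      thus "x \<in> P ` set l'" using v by auto
    qed
    show "\<forall>v\<in>P ` set l'. F v \<le> G v"
    proof
      fix x assume "x \<in> P ` set l'"
      then obtain v where v: "v \<in> set l'" "x = P v" by auto
      hence vv: "v \<in> set (map fst hl)" using s by blast
      have "G (P v) = hgt v" using bspec[OF Gh vv] v by blast
      moreover have "F (P v) \<le> hgt v" using bspec[OF Fh vv] by blast
      ultimately show "F x \<le> G x" using v by simp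
    qed
  qed auto
qed

lemma indep:
  assumes ok: "indep_ok l"
  shows "\<not> affine_dependent (P ` set l)"
proof
  assume "affine_dependent (P ` set l)"
  then obtain x where x: "x \<in> P ` set l" "x \<in> affine hull (P ` set l - {x})"
    unfolding affine_dependent_def by blast
  then obtain v where v: "v \<in> set l" "x = P v" by auto
  have "case filter (\<lambda>w. w \<noteq> v) l of [p,q,r] \<Rightarrow>
       (let n = cross (vsub q p) (vsub r p) in dot n q = dot n p \<and> dot n r = dot n p \<and> dot n v \<noteq> dot n p) | _ \<Rightarrow> False"
    using ok v unfolding indep_ok_def list_all_iff by auto
  then obtain p q r n where f: "filter (\<lambda>w. w \<noteq> v) l = [p,q,r]"
    and e: "dot n q = dot n p" "dot n r = dot n p" "dot n v \<noteq> dot n p"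
    by (auto split: list.splits simp: Let_def)
  have "P ` set l - {x} = P ` (set l - {v})"
    using v inj_P by (simp add: image_set_diff)
  also have "set l - {v} = set [p,q,r]" by (metis f set_filter set_minus_filter_out) 
  finally have eq: "P ` set l - {x} = {P p, P q, P r}" by simp
  let ?H = "{y. Nv n \<bullet> y = of_int (dot n p) / 6}"
  have "{P p, P q, P r} \<subseteq> ?H" using e by (simp add: Nv_inner_P)
  moreover have aff: "affine ?H" by (rule affine_hyperplane)
  ultimately have "affine hull {P p, P q, P r} \<subseteq> ?H" by (rule hull_minimal)
  moreover have "x \<notin> ?H" using e v by (simp add: Nv_inner_P)
  ultimately show False using x eq by auto
qed

lemma sqrt8: "sqrt 8 = 2 * sqrt (2::real)"
proof -
  have "sqrt (4 * 2) = sqrt 4 * sqrt (2::real)" by (rule real_sqrt_mult)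
  moreover have "sqrt (4::real) = 2" by (simp add: real_sqrt_unique)
  ultimately show ?thesis by simp
qed

lemma diam:
  assumes l: "l \<in> set tets"
  shows "diameter (convex hull (P ` set l)) \<le> sqrt 2 / 3"
proof -
  have fin: "finite (P ` set l)" by simp
  have ne: "P ` set l \<noteq> {}" using tl_props[OF l] by auto
  obtain a b where ab: "a \<in> P ` set l" "b \<in> P ` set l"
    and bd: "\<forall>x\<in>convex hull (P ` set l). \<forall>y\<in>convex hull (P ` set l). norm (x - y) \<le> norm (a - b)"
    using simplex_extremal_le[OF fin ne] by blast
  obtain v w where vw: "v \<in> set l" "w \<in> set l" "a = P v" "b = P w" using ab by auto
  have q: "dot (vsub v w) (vsub v w) \<le> 8" using tl_props[OF l] vw unfolding diam_ok_def list_all_iff by auto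
  have "sqrt (of_int (dot (vsub v w) (vsub v w))) \<le> sqrt (8::real)" using q by simp
  hence "norm (a - b) \<le> sqrt 2 / 3" using vw by (simp add: norm_P_diff sqrt8)
  thus ?thesis using bd ne by (intro diameter_le) (auto, force)
qed


lemma tl_hl: "set (concat tets) = set (map fst hl)"
proof
  show "set (concat tets) \<subseteq> set (map fst hl)" using verts_in_hl by auto
  show "set (map fst hl) \<subseteq> set (concat tets)"
  proof
    fix v assume "v \<in> set (map fst hl)"
    then obtain p where p: "p \<in> set hl" "v = fst p" by auto
    from list_all2_ex[OF K4 p(1)] obtain k where k: "k < length tets" "fst p \<in> set (tets ! k)" by blast
    have "tets ! k \<in> set tets" using k(1) by simp
    thus "v \<in> set (concat tets)" using p k by auto
  qed
qed

lemma verts_XX: "verts XX = P ` set (map fst hl)"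
  unfolding verts_def XX_def tl_hl[symmetric] by auto

lemma VL_in_cube: "v \<in> set (map fst hl) \<Longrightarrow> P v \<in> unit_cube"
  using tl_hl tl_in_cube by (metis UN_E set_concat)

definition kk :: "3 \<Rightarrow> nat" where "kk i = (if i = 1 then 0 else if i = 2 then 1 else 2)"

lemma kk_cases: "kk i = 0 \<or> kk i = 1 \<or> kk i = 2" by (simp add: kk_def)

lemma P_nth: "P v $ i = of_int (crdn (kk i) v) / 6"
  using exhaust_3[of i] by (cases v) (auto simp: kk_def)

lemma face_iff:
  assumes "P v \<in> unit_cube" "of_int e = 6 * c"
  shows "P v \<in> cube_face i c \<longleftrightarrow> crdn (kk i) v = e"
proof -
  have "P v \<in> cube_face i c \<longleftrightarrow> of_int (crdn (kk i) v) / 6 = c"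
    using assms(1) by (simp add: cube_face_def P_nth)
  also have "\<dots> \<longleftrightarrow> (of_int (crdn (kk i) v) :: real) = of_int e" using assms(2) by auto
  also have "\<dots> \<longleftrightarrow> crdn (kk i) v = e" by simp
  finally show ?thesis .
qed

lemma ce_cases: "c \<in> {0,1::real} \<Longrightarrow> \<exists>e. e \<in> {0,6} \<and> of_int e = 6 * c"
  by (auto intro: exI[of _ 0] exI[of _ 6])

lemma card_P: "distinct xs \<Longrightarrow> card (P ` set xs) = length xs"
proof -
  assume d: "distinct xs"
  have "card (P ` set xs) = card (set xs)" by (rule card_image) (rule inj_on_subset[OF inj_P], simp)
  thus ?thesis using d by (simp add: distinct_card)
qed

lemma face_card:
  assumes c: "c \<in> {0,1}"
  shows "card (verts XX \<inter> cube_face i c) = 16"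
proof -
  obtain e where e: "e \<in> {0,6}" "of_int e = 6 * c" using ce_cases[OF c] by blast
  let ?f = "filter (\<lambda>v. crdn (kk i) v = e) (map fst hl)"
  have "verts XX \<inter> cube_face i c = P ` set ?f"
  proof (rule set_eqI)
    fix x show "x \<in> verts XX \<inter> cube_face i c \<longleftrightarrow> x \<in> P ` set ?f"
    proof
      assume "x \<in> verts XX \<inter> cube_face i c"
      then obtain v where v: "v \<in> set (map fst hl)" "x = P v" "P v \<in> cube_face i c"
        by (auto simp: verts_XX simp del: P_simp)
      hence "crdn (kk i) v = e" using face_iff[OF VL_in_cube[OF v(1)] e(2)] by blast
      hence "v \<in> set ?f" using v(1) by (simp del: P_simp)
      thus "x \<in> P ` set ?f" using v(2) by blast
    next
      assume "x \<in> P ` set ?f"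
      then obtain v where v: "v \<in> set (map fst hl)" "x = P v" "crdn (kk i) v = e"
        by (auto simp del: P_simp)
      hence "P v \<in> cube_face i c" using face_iff[OF VL_in_cube[OF v(1)] e(2)] by blast
      thus "x \<in> verts XX \<inter> cube_face i c" using v by (auto simp: verts_XX simp del: P_simp)
    qed
  qed
  moreover have "card (P ` set ?f) = length ?f"
    using hl_dist by (intro card_P) simp
  moreover have "length ?f = 16" using K6 kk_cases[of i] e(1) by auto
  ultimately show ?thesis by simp
qed

lemma ev_conv:
  assumes "a mod 2 = 0" "0 \<le> a" "a \<le> 6"
  shows "\<exists>i::nat. i \<le> 3 \<and> (of_int a :: real) / 6 = real i / 3"
proof -
  have a: "a = 2 * (a div 2)" using assms(1) by (metis add.right_neutral div_mult_mod_eq mult.commute)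
  have "0 \<le> a div 2" "a div 2 \<le> 3" using assms by auto
  hence "nat (a div 2) \<le> 3 \<and> (of_int a :: real) / 6 = real (nat (a div 2)) / 3"
    by (subst a) (simp add: field_simps)
  thus ?thesis by blast
qed

lemma od_conv:
  assumes "a mod 2 = 1" "0 \<le> a" "a \<le> 6"
  shows "\<exists>i::nat. i \<le> 2 \<and> (of_int a :: real) / 6 = (real i + 1/2) / 3"
proof -
  have a: "a = 2 * (a div 2) + 1" using assms(1) by (metis div_mult_mod_eq mult.commute)
  have "0 \<le> a div 2" "a div 2 \<le> 2" using assms a by auto
  hence "nat (a div 2) \<le> 2 \<and> (of_int a :: real) / 6 = (real (nat (a div 2)) + 1/2) / 3"
    by (subst a) (simp add: field_simps)
  thus ?thesis by blast
qed

lemma grid_sub: "grid_pts \<subseteq> verts XX"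
proof
  fix x assume "x \<in> grid_pts"
  then obtain i j k :: nat where ijk: "i \<le> 3" "j \<le> 3" "k \<le> 3" and x: "x = pt (real i / 3) (real j / 3) (real k / 3)"
    unfolding grid_pts_def by blast
  have "x = P (2 * int i, 2 * int j, 2 * int k)" using x by simp
  moreover have "(2 * int i, 2 * int j, 2 * int k) \<in> set (map fst hl)"
    using K9 ijk by (auto simp: list_all_iff)
  ultimately show "x \<in> verts XX" by (simp add: verts_XX del: P_simp)
qed

lemma rest_sub: "verts XX - grid_pts \<subseteq> centre_pts"
proof
  fix x assume x: "x \<in> verts XX - grid_pts"
  then obtain v where v: "v \<in> set (map fst hl)" "x = P v" by (auto simp: verts_XX)
  obtain a b c where abc: "v = (a,b,c)" by (cases v)
  have "allev v \<or> allodd v" using K10 v(1) by (auto simp: list_all_iff)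
  thus "x \<in> centre_pts"
  proof
    assume "allev v"
    hence "a mod 2 = 0 \<and> 0 \<le> a \<and> a \<le> 6" "b mod 2 = 0 \<and> 0 \<le> b \<and> b \<le> 6" "c mod 2 = 0 \<and> 0 \<le> c \<and> c \<le> 6"
      by (auto simp: abc)
    then obtain i j k where "i \<le> 3" "(of_int a :: real) / 6 = real i / 3" "j \<le> 3" "(of_int b :: real) / 6 = real j / 3"
      "k \<le> 3" "(of_int c :: real) / 6 = real k / 3"
      using ev_conv by meson
    hence "x = pt (real i / 3) (real j / 3) (real k / 3) \<and> i \<le> 3 \<and> j \<le> 3 \<and> k \<le> 3" using v(2) abc by simp
    hence "x \<in> grid_pts" unfolding grid_pts_def by blast
    thus ?thesis using x by auto
  next
    assume "allodd v"
    hence "a mod 2 = 1 \<and> 0 \<le> a \<and> a \<le> 6" "b mod 2 = 1 \<and> 0 \<le> b \<and> b \<le> 6" "c mod 2 = 1 \<and> 0 \<le> c \<and> c \<le> 6"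
      by (auto simp: abc)
    then obtain i j k where "i \<le> 2" "(of_int a :: real) / 6 = (real i + 1/2) / 3" "j \<le> 2"
      "(of_int b :: real) / 6 = (real j + 1/2) / 3"
      "k \<le> 2" "(of_int c :: real) / 6 = (real k + 1/2) / 3"
      using od_conv by meson
    hence "x = pt ((real i + 1/2) / 3) ((real j + 1/2) / 3) ((real k + 1/2) / 3) \<and> i \<le> 2 \<and> j \<le> 2 \<and> k \<le> 2"
      using v(2) abc by (simp add: pt_eq_iff field_simps)
    thus ?thesis unfolding centre_pts_def by blast
  qed
qed

lemma face_inter:
  assumes l: "l \<in> set tets" and e: "of_int e = 6 * c"
  shows "P ` set l \<inter> cube_face i c = P ` set (ff (kk i) e l)"
  using face_iff[OF tl_in_cube[OF l] e] by (auto simp: ff_def simp del: P_simp)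

lemma ff_len: "l \<in> set tets \<Longrightarrow> e \<in> {0,6} \<Longrightarrow> length (ff (kk i) e l) \<le> 3"
  using K7 kk_cases[of i] by (auto simp: list_all_iff)

lemma ind_eq:
  assumes e: "e \<in> {0,6}" "of_int e = 6 * c"
  shows "induced_tris XX (cube_face i c) = (\<lambda>t. P ` set t) ` set (tris_on (kk i) e)"
proof (rule equalityI)
  show "induced_tris XX (cube_face i c) \<subseteq> (\<lambda>t. P ` set t) ` set (tris_on (kk i) e)"
  proof
    fix T assume "T \<in> induced_tris XX (cube_face i c)"
    then obtain l where l: "l \<in> set tets" and T: "T \<subseteq> P ` set l" "card T = 3" "T \<subseteq> cube_face i c"
      unfolding induced_tris_def XX_def by blast
    let ?f = "ff (kk i) e l"
    have sub: "T \<subseteq> P ` set ?f" using T face_inter[OF l e(2), of i] by blast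
    have c1: "card (P ` set ?f) \<le> length ?f"
      by (meson card_image_le card_length finite_set le_trans)
    have c2: "length ?f \<le> 3" using ff_len[OF l e(1)] .
    have Teq: "T = P ` set ?f" using sub T(2) c1 c2 by (intro card_seteq) auto
    have "card (P ` set ?f) \<le> card T" using c1 c2 T(2) by simp
    hence len: "length ?f = 3" using c1 c2 T(2) Teq by simp
    have "?f \<in> set (tris_on (kk i) e)" using l len by (auto simp: tris_on_def)
    thus "T \<in> (\<lambda>t. P ` set t) ` set (tris_on (kk i) e)" using Teq by blast
  qed
  show "(\<lambda>t. P ` set t) ` set (tris_on (kk i) e) \<subseteq> induced_tris XX (cube_face i c)"
  proof
    fix T assume "T \<in> (\<lambda>t. P ` set t) ` set (tris_on (kk i) e)"
    then obtain l where l: "l \<in> set tets" and len: "length (ff (kk i) e l) = 3"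
      and T: "T = P ` set (ff (kk i) e l)"
      by (auto simp: tris_on_def split: if_splits)
    have d: "distinct (ff (kk i) e l)" using tl_props[OF l] by (simp add: ff_def)
    have "card T = 3" using T d len card_P by simp
    moreover have "T \<subseteq> P ` set l" using T by (auto simp: ff_def)
    moreover have "T \<subseteq> cube_face i c" using T face_inter[OF l e(2)] by auto
    moreover have "P ` set l \<in> XX" using l by (simp add: XX_def)
    ultimately show "T \<in> induced_tris XX (cube_face i c)" unfolding induced_tris_def by blast
  qed
qed

lemma P_trk: "P (trk (kk i) v) = P v + axis i 1"
  using exhaust_3[of i] by (cases v) (auto simp: kk_def axis_def vec3_eq_iff field_simps)

lemma transl:
  "induced_tris XX (cube_face i 1) = (\<lambda>T. (\<lambda>v. v + axis i 1) ` T) ` induced_tris XX (cube_face i 0)"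
proof -
  have e1: "induced_tris XX (cube_face i 1) = (\<lambda>t. P ` set t) ` set (tris_on (kk i) 6)"
    by (rule ind_eq) auto
  have e0: "induced_tris XX (cube_face i 0) = (\<lambda>t. P ` set t) ` set (tris_on (kk i) 0)"
    by (rule ind_eq) auto
  have im: "(\<lambda>T. (\<lambda>v. v + axis i 1) ` T) ` ((\<lambda>t. P ` set t) ` set A) = (\<lambda>t. P ` set (map (trk (kk i)) t)) ` set A"
    for A by (simp add: image_image P_trk del: P_simp)
  have k8: "list_all2 (\<lambda>t t'. set (map (trk (kk i)) t) = set t') (tris_on (kk i) 0) (tris_on (kk i) 6)"
    using K8 kk_cases[of i] by auto
  have "list_all2 (\<lambda>t t'. P ` set (map (trk (kk i)) t) = P ` set t') (tris_on (kk i) 0) (tris_on (kk i) 6)"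
    using k8 by (rule list_all2_mono) simp
  from list_all2_img[OF this]
  show ?thesis unfolding e1 e0 im by simp
qed

lemma tri: "triangulation_of XX unit_cube"
  unfolding triangulation_of_def
proof (intro conjI)
  show "finite XX" by (simp add: XX_def)
  show "\<forall>S\<in>XX. card S = 4 \<and> \<not> affine_dependent S"
  proof
    fix S assume "S \<in> XX"
    then obtain l where l: "l \<in> set tets" "S = P ` set l" by (auto simp: XX_def)
    have "card S = 4" using l tl_props[OF l(1)] card_P by simp
    moreover have "\<not> affine_dependent S" using l indep tl_props[OF l(1)] by simp
    ultimately show "card S = 4 \<and> \<not> affine_dependent S" ..
  qed
  show "(\<Union>S\<in>XX. convex hull S) = unit_cube" by (rule cover_eq)
  show "\<forall>S\<in>XX. \<forall>T\<in>XX. convex hull S \<inter> convex hull T = convex hull (S \<inter> T)"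
    using pair_ok by (auto simp: XX_def simp del: P_simp)
qed

lemma card77: "card (verts XX) = 77"
proof -
  have "card (P ` set (map fst hl)) = length (map fst hl)"
    using hl_dist by (rule card_P)
  thus ?thesis using K3 by (simp add: verts_XX del: P_simp)
qed

lemma diam_all: "\<forall>S\<in>XX. diameter (convex hull S) \<le> sqrt 2 / 3"
  using diam by (auto simp: XX_def simp del: P_simp)


theorem lemma8:
  shows "\<exists>X. triangulation_of X unit_cube \<and>
    card (verts X) = 77 \<and>
    (\<forall>i c. c \<in> {0, 1} \<longrightarrow> card (verts X \<inter> cube_face i c) = 16) \<and>
    grid_pts \<subseteq> verts X \<and>
    verts X - grid_pts \<subseteq> centre_pts \<and>
    (\<forall>i. induced_tris X (cube_face i 1) =
           (\<lambda>T. (\<lambda>v. v + axis i 1) ` T) ` induced_tris X (cube_face i 0)) \<and>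
    (\<forall>S\<in>X. diameter (convex hull S) \<le> sqrt 2 / 3)"
proof (intro exI[of _ XX] conjI allI impI)
  show "triangulation_of XX unit_cube" by (rule tri)
  show "card (verts XX) = 77" by (rule card77)
  show "card (verts XX \<inter> cube_face i c) = 16" if "c \<in> {0,1}" for i c using that by (rule face_card)
  show "grid_pts \<subseteq> verts XX" by (rule grid_sub)
  show "verts XX - grid_pts \<subseteq> centre_pts" by (rule rest_sub)
  show "induced_tris XX (cube_face i 1) = (\<lambda>T. (\<lambda>v. v + axis i 1) ` T) ` induced_tris XX (cube_face i 0)" for i
    by (rule transl)
  show "\<forall>S\<in>XX. diameter (convex hull S) \<le> sqrt 2 / 3" by (rule diam_all)
qed

end
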